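(* Let $\mathcal{T}$ be a tree (on vertex set $\{1,\dots,n\}$, viewed as a subgraph of $K_n$) with $m$ edges, and let $\mathcal{E}_{\mathcal{T}}$ be its generalized Fomin–Kirillov algebra. Then $p(\mathcal{E}_{\mathcal{T}})\leq m$, i.e. $\mathcal{E}_{\mathcal{T}}$ admits no truncated point module of degree greater than $m$. Moreover this bound is best possible (it is attained, e.g., by path graphs).
   Context: Work over an algebraically closed field $k$. The Fomin–Kirillov algebra $\mathcal{E}_n$ is the graded $k$-algebra generated by degree-$1$ elements $x_{ij}$, $1\leq i<j\leq n$, subject to: $x_{ij}^2=0$; $x_{ij}x_{kl}=x_{kl}x_{ij}$ whenever $\{i,j\}\cap\{k,l\}=\emptyset$; $x_{ij}x_{jk}-x_{jk}x_{ik}-x_{ik}x_{ij}=0$ and $x_{jk}x_{ij}-x_{ik}x_{jk}-x_{ij}x_{ik}=0$ for $i<j<k$. For a graph $G$ on vertex set $\{1,\dots,n\}$, the generalized Fomin–Kirillov algebra $\mathcal{E}_G$ is the (graded) subalgebra of $\mathcal{E}_n$ generated by the $x_{ij}$ with $\{i,j\}$ an edge of $G$. For a connected graded algebra $A$ generated in degree $1$, a degree-$d$ truncated point module is a graded cyclic module generated in degree $0$ with Hilbert series $1+t+\cdots+t^d$; $\mathcal{P}_d(A)$ is the space of such modules, and $p(A):=\sup\{d\in\mathbb{N}:\mathcal{P}_d(A)\neq\emptyset\}$. *)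

theory Defs
  imports Main "HOL-Library.Extended_Nat" "HOL-Computational_Algebra.Polynomial"
begin

text \<open>An element of the free algebra
  is a coefficient function on words (lists of generators); only finitely
  supported functions arise below. A word [a1,...,al] stands for the monomial
  x_a1 x_a2 ... x_al.\<close>

type_synonym gen = "nat \<times> nat"
type_synonym 'k ncpoly = "gen list \<Rightarrow> 'k"

definition nc_mult :: "'k::comm_ring_1 ncpoly \<Rightarrow> 'k ncpoly \<Rightarrow> 'k ncpoly" where
  "nc_mult p q = (\<lambda>w. \<Sum>i\<le>length w. p (take i w) * q (drop i w))"

definition nc_word :: "gen list \<Rightarrow> 'k::comm_ring_1 ncpoly" where
  "nc_word u = (\<lambda>w. if w = u then 1 else 0)"

definition nc_add :: "'k::comm_ring_1 ncpoly \<Rightarrow> 'k ncpoly \<Rightarrow> 'k ncpoly" where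
  "nc_add p q = (\<lambda>w. p w + q w)"

definition nc_sub :: "'k::comm_ring_1 ncpoly \<Rightarrow> 'k ncpoly \<Rightarrow> 'k ncpoly" where
  "nc_sub p q = (\<lambda>w. p w - q w)"

definition nc_smult :: "'k::comm_ring_1 \<Rightarrow> 'k ncpoly \<Rightarrow> 'k ncpoly" where
  "nc_smult c p = (\<lambda>w. c * p w)"

definition gens :: "nat \<Rightarrow> gen set" where
  "gens n = {(i, j). 1 \<le> i \<and> i < j \<and> j \<le> n}"

definition fk_relators :: "nat \<Rightarrow> 'k::comm_ring_1 ncpoly set" where
  "fk_relators n =
     {nc_word [(i,j),(i,j)] | i j. (i,j) \<in> gens n}
   \<union> {nc_sub (nc_word [(i,j),(k,l)]) (nc_word [(k,l),(i,j)]) | i j k l.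
        (i,j) \<in> gens n \<and> (k,l) \<in> gens n \<and> {i,j} \<inter> {k,l} = {}}
   \<union> {nc_sub (nc_sub (nc_word [(i,j),(j,k)]) (nc_word [(j,k),(i,k)])) (nc_word [(i,k),(i,j)])
        | i j k. 1 \<le> i \<and> i < j \<and> j < k \<and> k \<le> n}
   \<union> {nc_sub (nc_sub (nc_word [(j,k),(i,j)]) (nc_word [(i,k),(j,k)])) (nc_word [(i,j),(i,k)])
        | i j k. 1 \<le> i \<and> i < j \<and> j < k \<and> k \<le> n}"

inductive_set fk_ideal :: "nat \<Rightarrow> 'k::comm_ring_1 ncpoly set" for n where
  zero: "(\<lambda>w. 0) \<in> fk_ideal n"
| rel: "r \<in> fk_relators n \<Longrightarrow> r \<in> fk_ideal n"
| add: "p \<in> fk_ideal n \<Longrightarrow> q \<in> fk_ideal n \<Longrightarrow> nc_add p q \<in> fk_ideal n"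
| smult: "p \<in> fk_ideal n \<Longrightarrow> nc_smult c p \<in> fk_ideal n"
| lmult: "p \<in> fk_ideal n \<Longrightarrow> u \<in> lists (gens n) \<Longrightarrow> nc_mult (nc_word u) p \<in> fk_ideal n"
| rmult: "p \<in> fk_ideal n \<Longrightarrow> u \<in> lists (gens n) \<Longrightarrow> nc_mult p (nc_word u) \<in> fk_ideal n"

text \<open>The generalized FK algebra E_G (subalgebra of E_n generated by the x_e, e an edge of G)
  is the free algebra on the edge set E modulo the kernel of the natural map to E_n,
  i.e. modulo the ideal of E_n-relations intersected with the free algebra on E.\<close>
definition fkG_kernel :: "nat \<Rightarrow> gen set \<Rightarrow> 'k::comm_ring_1 ncpoly set" where
  "fkG_kernel n E = {p \<in> fk_ideal n. \<forall>w. p w \<noteq> 0 \<longrightarrow> w \<in> lists E}"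

text \<open>A graded module M = M_0 + ... + M_d with each M_i one-dimensional, with basis
  vectors e_0,...,e_d. A generator x_a (degree 1) acts by x_a e_i = c i a e_(i+1)
  (and x_a e_d = 0, encoded by c j a = 0 for j >= d). The word w then acts on
  e_i by the scalar wcoef c i w times e_(i + length w).\<close>
fun wcoef :: "(nat \<Rightarrow> gen \<Rightarrow> 'k::comm_ring_1) \<Rightarrow> nat \<Rightarrow> gen list \<Rightarrow> 'k" where
  "wcoef c i [] = 1"
| "wcoef c i (a # w) = c (i + length w) a * wcoef c i w"

definition truncated_point_module ::
    "nat \<Rightarrow> gen set \<Rightarrow> nat \<Rightarrow> (nat \<Rightarrow> gen \<Rightarrow> 'k::field) \<Rightarrow> bool" where
  "truncated_point_module n E d c \<longleftrightarrow>
     \<comment> \<open>graded: M_j = 0 for j > d\<close>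
     (\<forall>j a. d \<le> j \<longrightarrow> c j a = 0) \<and>
     \<comment> \<open>cyclic, generated by e_0: every M_i (i \<le> d) equals (E_G)_i e_0\<close>
     (\<forall>i\<le>d. \<exists>w. set w \<subseteq> E \<and> length w = i \<and> wcoef c 0 w \<noteq> 0) \<and>
     \<comment> \<open>a module over E_G: every element of the kernel acts as zero on every e_i\<close>
     (\<forall>p \<in> fkG_kernel n E. \<forall>i\<le>d. \<forall>l.
        (\<Sum>w \<in> {w. set w \<subseteq> E \<and> length w = l}. p w * wcoef c i w) = 0)"

definition pinv :: "'k::field itself \<Rightarrow> nat \<Rightarrow> gen set \<Rightarrow> enat" where
  "pinv (T :: 'k itself) n E =
     Sup {enat d | d. \<exists>c :: nat \<Rightarrow> gen \<Rightarrow> 'k. truncated_point_module n E d c}"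

definition adj :: "gen set \<Rightarrow> nat \<Rightarrow> nat \<Rightarrow> bool" where
  "adj E u v \<longleftrightarrow> u \<noteq> v \<and> (min u v, max u v) \<in> E"

definition connected_graph :: "nat \<Rightarrow> gen set \<Rightarrow> bool" where
  "connected_graph n E \<longleftrightarrow>
     (\<forall>u\<in>{1..n}. \<forall>v\<in>{1..n}. (u, v) \<in> {(a, b). adj E a b}\<^sup>*)"

definition acyclic_graph :: "gen set \<Rightarrow> bool" where
  "acyclic_graph E \<longleftrightarrow>
     \<not> (\<exists>vs. 3 \<le> length vs \<and> distinct vs \<and>
            (\<forall>i < length vs. adj E (vs ! i) (vs ! ((i + 1) mod length vs))))"

definition is_tree :: "nat \<Rightarrow> gen set \<Rightarrow> bool" where
  "is_tree n E \<longleftrightarrow> 1 \<le> n \<and> E \<subseteq> gens n \<and> connected_graph n E \<and> acyclic_graph E"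

definition path_edges :: "nat \<Rightarrow> gen set" where
  "path_edges n = {(i, i + 1) | i. 1 \<le> i \<and> i < n}"

end

theory Submission
  imports Defs "HOL-Library.Function_Algebras"
begin

lemma sum_fun_apply': "(sum f A) x = sum (\<lambda>a. f a x) A"
  by (induction A rule: infinite_finite_induct) auto

lemma nc_add_eq: "nc_add p q = p + q" by (auto simp: nc_add_def)
lemma nc_sub_eq: "nc_sub p q = p - q" by (auto simp: nc_sub_def)

lemma I_zero: "(0::'k::comm_ring_1 ncpoly) \<in> fk_ideal n"
  using fk_ideal.zero[of n] by (simp add: zero_fun_def)
lemma I_add: "p \<in> fk_ideal n \<Longrightarrow> q \<in> fk_ideal n \<Longrightarrow> p + q \<in> fk_ideal n"
  using fk_ideal.add by (metis nc_add_eq)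
lemma I_smult: "p \<in> fk_ideal n \<Longrightarrow> nc_smult c p \<in> fk_ideal n"
  by (rule fk_ideal.smult)
lemma I_uminus: "p \<in> fk_ideal n \<Longrightarrow> - p \<in> fk_ideal n"
proof -
  assume "p \<in> fk_ideal n"
  then have "nc_smult (-1) p \<in> fk_ideal n" by (rule fk_ideal.smult)
  moreover have "nc_smult (-1) p = - p" by (auto simp: nc_smult_def)
  ultimately show ?thesis by simp
qed
lemma I_diff: "p \<in> fk_ideal n \<Longrightarrow> q \<in> fk_ideal n \<Longrightarrow> p - q \<in> fk_ideal n"
  using I_add[of p n "-q"] I_uminus[of q n] by simp
lemma I_sum: "(\<And>a. a \<in> A \<Longrightarrow> f a \<in> fk_ideal n) \<Longrightarrow> sum f A \<in> fk_ideal n"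
  by (induction A rule: infinite_finite_induct) (auto intro: I_zero I_add)

lemma nc_mult_word_left:
  "nc_mult (nc_word u) p = (\<lambda>w. if take (length u) w = u then p (drop (length u) w) else 0)"
proof (rule ext)
  fix w :: "gen list"
  have "nc_mult (nc_word u) p w = (\<Sum>i\<le>length w. if i = length u then (if take i w = u then p (drop i w) else 0) else 0)"
    unfolding nc_mult_def nc_word_def by (rule sum.cong) auto
  also have "\<dots> = (if take (length u) w = u then p (drop (length u) w) else 0)"
    by (auto simp: sum.delta)
  finally show "nc_mult (nc_word u) p w = (if take (length u) w = u then p (drop (length u) w) else 0)" .
qed

lemma nc_mult_word_right:
  "nc_mult p (nc_word v) = (\<lambda>w. if length v \<le> length w \<and> drop (length w - length v) w = v
      then p (take (length w - length v) w) else 0)"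
proof (rule ext)
  fix w :: "gen list"
  have "nc_mult p (nc_word v) w = (\<Sum>i\<le>length w. if i = length w - length v then
          (if length v \<le> length w \<and> drop i w = v then p (take i w) else 0) else 0)"
    unfolding nc_mult_def nc_word_def by (rule sum.cong) auto
  also have "\<dots> = (if length v \<le> length w \<and> drop (length w - length v) w = v
      then p (take (length w - length v) w) else 0)"
    by (auto simp: sum.delta)
  finally show "nc_mult p (nc_word v) w = (if length v \<le> length w \<and> drop (length w - length v) w = v
      then p (take (length w - length v) w) else 0)" .
qed

lemma nc_word_mult: "nc_mult (nc_word u) (nc_word v) = (nc_word (u @ v) :: 'k::comm_ring_1 ncpoly)"
  unfolding nc_mult_word_left by (auto simp: nc_word_def fun_eq_iff)
    (metis append_take_drop_id)

lemma nc_mult_smult_left: "nc_mult (nc_smult c p) q = nc_smult c (nc_mult p q)"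
  by (auto simp: nc_mult_def nc_smult_def fun_eq_iff sum_distrib_left mult.assoc)
lemma nc_mult_smult_right: "nc_mult p (nc_smult c q) = nc_smult c (nc_mult p q)"
  by (auto simp: nc_mult_def nc_smult_def fun_eq_iff sum_distrib_left mult_ac)
lemma nc_mult_add_left: "nc_mult (p + q) r = nc_mult p r + nc_mult q r"
  by (auto simp: nc_mult_def fun_eq_iff sum.distrib algebra_simps)
lemma nc_mult_add_right: "nc_mult p (q + r) = nc_mult p q + nc_mult p r"
  by (auto simp: nc_mult_def fun_eq_iff sum.distrib algebra_simps)
lemma nc_mult_diff_left: "nc_mult (p - q) r = nc_mult p r - nc_mult q r"
  by (auto simp: nc_mult_def fun_eq_iff sum_subtractf algebra_simps)
lemma nc_mult_diff_right: "nc_mult p (q - r) = nc_mult p q - nc_mult p r"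
  by (auto simp: nc_mult_def fun_eq_iff sum_subtractf algebra_simps)
lemma nc_mult_zero_left: "nc_mult 0 r = 0"
  by (auto simp: nc_mult_def fun_eq_iff)
lemma nc_mult_zero_right: "nc_mult r 0 = 0"
  by (auto simp: nc_mult_def fun_eq_iff)
lemma nc_mult_sum_left: "nc_mult (sum f A) r = (\<Sum>a\<in>A. nc_mult (f a) r)"
proof (induction A rule: infinite_finite_induct)
  case (insert x F)
  then show ?case by (simp only: sum.insert[OF insert(1,2)] nc_mult_add_left)
qed (auto simp: nc_mult_def)
lemma nc_mult_sum_right: "nc_mult r (sum f A) = (\<Sum>a\<in>A. nc_mult r (f a))"
proof (induction A rule: infinite_finite_induct)
  case (insert x F)
  then show ?case by (simp only: sum.insert[OF insert(1,2)] nc_mult_add_right)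
qed (auto simp: nc_mult_def)

lemma I_lmult: "p \<in> fk_ideal n \<Longrightarrow> set u \<subseteq> gens n \<Longrightarrow> nc_mult (nc_word u) p \<in> fk_ideal n"
  by (rule fk_ideal.lmult) auto
lemma I_rmult: "p \<in> fk_ideal n \<Longrightarrow> set u \<subseteq> gens n \<Longrightarrow> nc_mult p (nc_word u) \<in> fk_ideal n"
  by (rule fk_ideal.rmult) auto

definition sg :: "nat \<Rightarrow> nat \<Rightarrow> 'k::comm_ring_1" where "sg u v = (if u < v then 1 else -1)"
definition ed :: "nat \<Rightarrow> nat \<Rightarrow> gen" where "ed u v = (min u v, max u v)"
definition Y :: "(nat \<times> nat) list \<Rightarrow> 'k::comm_ring_1 ncpoly" where
  "Y ps = nc_smult (prod_list (map (\<lambda>(u,v). sg u v) ps)) (nc_word (map (\<lambda>(u,v). ed u v) ps))"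
definition valid :: "nat \<Rightarrow> nat \<times> nat \<Rightarrow> bool" where
  "valid n uv \<longleftrightarrow> fst uv \<noteq> snd uv \<and> fst uv \<in> {1..n} \<and> snd uv \<in> {1..n}"
definition ctx :: "(nat \<times> nat) list \<Rightarrow> 'k::comm_ring_1 ncpoly \<Rightarrow> (nat \<times> nat) list \<Rightarrow> 'k ncpoly" where
  "ctx X p Z = nc_mult (nc_mult (Y X) p) (Y Z)"

lemma valid_ed: "valid n (u,v) \<Longrightarrow> ed u v \<in> gens n"
  by (auto simp: valid_def ed_def gens_def)

lemma valid_set: "\<forall>x\<in>set X. valid n x \<Longrightarrow> set (map (\<lambda>(u,v). ed u v) X) \<subseteq> gens n"
  using valid_ed by fastforce

lemma Y_mult: "nc_mult (Y X) (Y Z) = (Y (X @ Z) :: 'k::comm_ring_1 ncpoly)"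
  unfolding Y_def by (simp add: nc_mult_smult_left nc_mult_smult_right nc_word_mult)
     (simp add: nc_smult_def fun_eq_iff)

lemma ctx_Y: "ctx X (Y m) Z = (Y (X @ m @ Z) :: 'k::comm_ring_1 ncpoly)"
  unfolding ctx_def by (simp add: Y_mult)

lemma ctx_I:
  assumes "p \<in> fk_ideal n" "\<forall>x\<in>set X. valid n x" "\<forall>x\<in>set Z. valid n x"
  shows "ctx X p Z \<in> fk_ideal n"
  unfolding ctx_def Y_def nc_mult_smult_left nc_mult_smult_right
  by (intro I_smult I_rmult I_lmult assms(1) valid_set assms(2,3))

lemma ctx_add: "ctx X (p + q) Z = ctx X p Z + ctx X q Z"
  unfolding ctx_def by (simp add: nc_mult_add_left nc_mult_add_right)
lemma ctx_diff: "ctx X (p - q) Z = ctx X p Z - ctx X q Z"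
  unfolding ctx_def by (simp add: nc_mult_diff_left nc_mult_diff_right)
lemma ctx_sum: "ctx X (sum f A) Z = (\<Sum>a\<in>A. ctx X (f a) Z)"
  unfolding ctx_def by (simp add: nc_mult_sum_left nc_mult_sum_right)

lemma sg_flip: "u \<noteq> v \<Longrightarrow> (sg v u :: 'k::comm_ring_1) = - sg u v"
  by (auto simp: sg_def)
lemma ed_flip: "ed v u = ed u v" by (auto simp: ed_def)

lemma Y_flip:
  assumes "u \<noteq> v"
  shows "(Y (X @ [(v,u)] @ Z) :: 'k::comm_ring_1 ncpoly) = - Y (X @ [(u,v)] @ Z)"
proof -
  have s: "(sg v u :: 'k) = - sg u v" using sg_flip[OF assms] .
  have e: "ed v u = ed u v" by (rule ed_flip)
  show ?thesis unfolding Y_def by (simp add: s e nc_smult_def fun_eq_iff)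
qed

definition cg :: "nat \<Rightarrow> 'k::comm_ring_1 ncpoly \<Rightarrow> 'k ncpoly \<Rightarrow> bool" where
  "cg n p q \<longleftrightarrow> p - q \<in> fk_ideal n"

lemma cg_refl: "cg n p p" by (simp add: cg_def I_zero)
lemma cg_sym: "cg n p q \<Longrightarrow> cg n q p"
  unfolding cg_def using I_uminus by fastforce
lemma cg_trans: "cg n p q \<Longrightarrow> cg n q r \<Longrightarrow> cg n p r"
  unfolding cg_def using I_add by fastforce
lemma cg_add: "cg n p p' \<Longrightarrow> cg n q q' \<Longrightarrow> cg n (p + q) (p' + q')"
  unfolding cg_def using I_add by (fastforce simp: algebra_simps)
lemma cg_diff: "cg n p p' \<Longrightarrow> cg n q q' \<Longrightarrow> cg n (p - q) (p' - q')"
  unfolding cg_def using I_diff by (fastforce simp: algebra_simps)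
lemma cg_sum: "(\<And>a. a \<in> A \<Longrightarrow> cg n (f a) (g a)) \<Longrightarrow> cg n (sum f A) (sum g A)"
  unfolding cg_def using I_sum[of A "\<lambda>a. f a - g a" n] by (simp add: sum_subtractf)
lemma cg_I: "cg n p 0 \<Longrightarrow> p \<in> fk_ideal n" by (simp add: cg_def)
lemma cg_ctx: "cg n p q \<Longrightarrow> \<forall>x\<in>set X. valid n x \<Longrightarrow> \<forall>x\<in>set Z. valid n x \<Longrightarrow> cg n (ctx X p Z) (ctx X q Z)"
  unfolding cg_def by (metis ctx_I ctx_diff)

lemma rel_sq: "valid n (a,b) \<Longrightarrow> (Y [(a,b),(a,b)] :: 'k::comm_ring_1 ncpoly) \<in> fk_ideal n"
proof -
  assume v: "valid n (a,b)"
  have "(nc_word [ed a b, ed a b] :: 'k ncpoly) \<in> fk_relators n"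
    using valid_ed[OF v] unfolding fk_relators_def
    by (rule_tac UnI1, rule_tac UnI1, rule_tac UnI1) (cases "ed a b", auto)
  then have "(nc_word [ed a b, ed a b] :: 'k ncpoly) \<in> fk_ideal n" by (rule fk_ideal.rel)
  then show ?thesis unfolding Y_def by (auto intro: I_smult)
qed

lemma rel_comm:
  assumes "valid n (p,q)" "valid n (r,s)" "{p,q} \<inter> {r,s} = {}"
  shows "(Y [(p,q),(r,s)] - Y [(r,s),(p,q)] :: 'k::comm_ring_1 ncpoly) \<in> fk_ideal n"
proof -
  have "(nc_sub (nc_word [ed p q, ed r s]) (nc_word [ed r s, ed p q]) :: 'k ncpoly) \<in> fk_relators n"
  proof -
    obtain i j where ij: "ed p q = (i,j)" by fastforce
    obtain k l where kl: "ed r s = (k,l)" by fastforce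
    have "{i,j} = {p,q}" using ij by (auto simp: ed_def min_def max_def split: if_splits)
    moreover have "{k,l} = {r,s}" using kl by (auto simp: ed_def min_def max_def split: if_splits)
    ultimately have "{i,j} \<inter> {k,l} = {}" using assms(3) by simp
    moreover have "(i,j) \<in> gens n" "(k,l) \<in> gens n" using valid_ed[OF assms(1)] valid_ed[OF assms(2)] ij kl by auto
    ultimately show ?thesis unfolding fk_relators_def ij kl
      by (rule_tac UnI1, rule_tac UnI1, rule_tac UnI2) blast
  qed
  then have "(nc_sub (nc_word [ed p q, ed r s]) (nc_word [ed r s, ed p q]) :: 'k ncpoly) \<in> fk_ideal n" by (rule fk_ideal.rel)
  then have "nc_smult (sg p q * sg r s) (nc_sub (nc_word [ed p q, ed r s]) (nc_word [ed r s, ed p q]) :: 'k ncpoly) \<in> fk_ideal n"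
    by (rule I_smult)
  moreover have "nc_smult (sg p q * sg r s) (nc_sub (nc_word [ed p q, ed r s]) (nc_word [ed r s, ed p q]) :: 'k ncpoly)
     = Y [(p,q),(r,s)] - Y [(r,s),(p,q)]"
    unfolding Y_def by (auto simp: nc_smult_def nc_sub_def fun_eq_iff algebra_simps)
  ultimately show ?thesis by simp
qed

definition Tri :: "nat \<Rightarrow> nat \<Rightarrow> nat \<Rightarrow> 'k::comm_ring_1 ncpoly" where
  "Tri a b c = Y [(a,b),(b,c)] + Y [(b,c),(c,a)] + Y [(c,a),(a,b)]"

lemma Tri_rot: "Tri a b c = Tri b c a"
  unfolding Tri_def by (simp add: ac_simps)

lemma Tri_min:
  assumes "a < b" "a < c" "b \<noteq> c" "a \<ge> 1" "b \<le> n" "c \<le> n"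
  shows "(Tri a b c :: 'k::comm_ring_1 ncpoly) \<in> fk_ideal n"
proof (cases "b < c")
  case True
  have "(nc_sub (nc_sub (nc_word [(a,b),(b,c)]) (nc_word [(b,c),(a,c)])) (nc_word [(a,c),(a,b)]) :: 'k ncpoly) \<in> fk_relators n"
    unfolding fk_relators_def
    by (rule UnI1, rule UnI2, rule CollectI, rule exI[of _ a], rule exI[of _ b], rule exI[of _ c])
       (intro conjI refl; use assms True in simp)
  then have "(nc_sub (nc_sub (nc_word [(a,b),(b,c)]) (nc_word [(b,c),(a,c)])) (nc_word [(a,c),(a,b)]) :: 'k ncpoly) \<in> fk_ideal n"
    by (rule fk_ideal.rel)
  moreover have "(nc_sub (nc_sub (nc_word [(a,b),(b,c)]) (nc_word [(b,c),(a,c)])) (nc_word [(a,c),(a,b)]) :: 'k ncpoly) = Tri a b c"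
    unfolding Tri_def Y_def using assms True
    by (auto simp: nc_smult_def nc_sub_def fun_eq_iff sg_def ed_def)
  ultimately show ?thesis by simp
next
  case False
  then have cb: "c < b" using assms by simp
  have "(nc_sub (nc_sub (nc_word [(c,b),(a,c)]) (nc_word [(a,b),(c,b)])) (nc_word [(a,c),(a,b)]) :: 'k ncpoly) \<in> fk_relators n"
    unfolding fk_relators_def
    by (rule UnI2, rule CollectI, rule exI[of _ a], rule exI[of _ c], rule exI[of _ b])
       (intro conjI refl; use assms cb in simp)
  then have "(nc_sub (nc_sub (nc_word [(c,b),(a,c)]) (nc_word [(a,b),(c,b)])) (nc_word [(a,c),(a,b)]) :: 'k ncpoly) \<in> fk_ideal n"
    by (rule fk_ideal.rel)
  moreover have "(nc_sub (nc_sub (nc_word [(c,b),(a,c)]) (nc_word [(a,b),(c,b)])) (nc_word [(a,c),(a,b)]) :: 'k ncpoly) = Tri a b c"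
    unfolding Tri_def Y_def using assms cb
    by (auto simp: nc_smult_def nc_sub_def fun_eq_iff sg_def ed_def)
  ultimately show ?thesis by simp
qed

lemma rel_tri:
  assumes "a \<noteq> b" "b \<noteq> c" "a \<noteq> c" "a \<in> {1..n}" "b \<in> {1..n}" "c \<in> {1..n}"
  shows "(Tri a b c :: 'k::comm_ring_1 ncpoly) \<in> fk_ideal n"
proof -
  consider "a < b \<and> a < c" | "b < a \<and> b < c" | "c < a \<and> c < b" using assms by linarith
  then show ?thesis
  proof cases
    case 1 then show ?thesis using Tri_min[of a b c n] assms by auto
  next
    case 2
    have "(Tri b c a :: 'k ncpoly) \<in> fk_ideal n" using 2 Tri_min[of b c a n] assms by auto
    moreover have "(Tri a b c :: 'k ncpoly) = Tri b c a" by (rule Tri_rot)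
    ultimately show ?thesis by simp
  next
    case 3
    have "(Tri c a b :: 'k ncpoly) \<in> fk_ideal n" using 3 Tri_min[of c a b n] assms by auto
    moreover have "(Tri a b c :: 'k ncpoly) = Tri c a b" by (metis Tri_rot)
    ultimately show ?thesis by simp
  qed
qed

lemma comm_move:
  assumes "valid n z" "\<forall>q\<in>set Q. valid n q \<and> {fst q, snd q} \<inter> {fst z, snd z} = {}"
    "\<forall>x\<in>set X. valid n x" "\<forall>x\<in>set Z. valid n x"
  shows "cg n (Y (X @ [z] @ Q @ Z) :: 'k::comm_ring_1 ncpoly) (Y (X @ Q @ [z] @ Z))"
  using assms(2,3)
proof (induction Q arbitrary: X)
  case Nil
  then show ?case by (simp add: cg_refl)
next
  case (Cons q Q)
  obtain p1 p2 where z: "z = (p1,p2)" by fastforce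
  obtain r1 r2 where q: "q = (r1,r2)" by fastforce
  have vq: "valid n q" and dq: "{fst q, snd q} \<inter> {fst z, snd z} = {}" using Cons.prems by auto
  have "(Y [z,q] - Y [q,z] :: 'k ncpoly) \<in> fk_ideal n"
    using rel_comm[of n p1 p2 r1 r2] assms(1) vq dq z q by auto
  then have "ctx X (Y [z,q] - Y [q,z] :: 'k ncpoly) (Q @ Z) \<in> fk_ideal n"
    by (rule ctx_I) (use Cons.prems assms(4) in auto)
  then have 1: "cg n (Y (X @ [z,q] @ Q @ Z) :: 'k ncpoly) (Y (X @ [q,z] @ Q @ Z))"
    unfolding cg_def ctx_diff ctx_Y .
  have 2: "cg n (Y ((X @ [q]) @ [z] @ Q @ Z) :: 'k ncpoly) (Y ((X @ [q]) @ Q @ [z] @ Z))"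
    by (rule Cons.IH) (use Cons.prems vq in auto)
  have h2: "cg n (Y (X @ [q,z] @ Q @ Z) :: 'k ncpoly) (Y (X @ (q # Q) @ [z] @ Z))"
    using 2 by simp
  show ?case using cg_trans[OF 1 h2] by simp
qed

lemma comm_move':
  assumes "valid n z" "\<forall>q\<in>set Q. valid n q \<and> {fst q, snd q} \<inter> {fst z, snd z} = {}"
    "\<forall>x\<in>set X. valid n x" "\<forall>x\<in>set Z. valid n x"
  shows "cg n (Y (X @ Q @ [z] @ Z) :: 'k::comm_ring_1 ncpoly) (Y (X @ [z] @ Q @ Z))"
  using comm_move[OF assms] by (rule cg_sym)

lemma star_rel:
  assumes "a \<noteq> b0" "a \<noteq> bl" "b0 \<noteq> bl" "a \<in> {1..n}" "b0 \<in> {1..n}" "bl \<in> {1..n}"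
    "\<forall>x\<in>set X. valid n x" "\<forall>x\<in>set Z. valid n x"
  shows "cg n (Y (X @ [(a,bl),(a,b0)] @ Z) :: 'k::comm_ring_1 ncpoly)
             (Y (X @ [(a,b0),(b0,bl)] @ Z) - Y (X @ [(b0,bl),(a,bl)] @ Z))"
proof -
  have T: "(Tri a b0 bl :: 'k ncpoly) \<in> fk_ideal n" by (rule rel_tri) (use assms in auto)
  have e1: "(Y [(b0,bl),(bl,a)] :: 'k ncpoly) = - Y [(b0,bl),(a,bl)]"
    using Y_flip[of a bl "[(b0,bl)]" "[]"] assms by simp
  have e2: "(Y [(bl,a),(a,b0)] :: 'k ncpoly) = - Y [(a,bl),(a,b0)]"
    using Y_flip[of a bl "[]" "[(a,b0)]"] assms by simp
  have "(Tri a b0 bl :: 'k ncpoly) = Y [(a,b0),(b0,bl)] - Y [(b0,bl),(a,bl)] - Y [(a,bl),(a,b0)]"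
    unfolding Tri_def e1 e2 by simp
  with T have "ctx X (Y [(a,b0),(b0,bl)] - Y [(b0,bl),(a,bl)] - Y [(a,bl),(a,b0)] :: 'k ncpoly) Z \<in> fk_ideal n"
    using ctx_I assms(7,8) by metis
  then have "- (Y (X @ [(a,b0),(b0,bl)] @ Z) - Y (X @ [(b0,bl),(a,bl)] @ Z) - Y (X @ [(a,bl),(a,b0)] @ Z) :: 'k ncpoly) \<in> fk_ideal n"
    unfolding ctx_diff ctx_Y by (rule I_uminus)
  then show ?thesis unfolding cg_def by (simp add: algebra_simps)
qed

definition cycw :: "'a list \<Rightarrow> nat \<Rightarrow> 'a list" where "cycw bs t = rotate t bs @ [bs ! t]"

definition Scyc :: "nat \<Rightarrow> nat list \<Rightarrow> 'k::comm_ring_1 ncpoly" where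
  "Scyc a bs = (\<Sum>t<length bs. Y (map (\<lambda>b. (a,b)) (cycw bs t)))"

lemma L1: "t < length mid \<Longrightarrow> cycw (b0 # mid @ [bl]) (Suc t) = drop t mid @ [bl, b0] @ take t mid @ [mid ! t]"
  unfolding cycw_def rotate_drop_take by (simp add: nth_append)
lemma L2: "t < length mid \<Longrightarrow> cycw (b0 # mid) (Suc t) = drop t mid @ [b0] @ take t mid @ [mid ! t]"
  unfolding cycw_def rotate_drop_take by simp
lemma L3: "t < length mid \<Longrightarrow> cycw (mid @ [bl]) t = drop t mid @ [bl] @ take t mid @ [mid ! t]"
  unfolding cycw_def rotate_drop_take by (simp add: nth_append)
lemma L4: "cycw (b0 # mid @ [bl]) 0 = b0 # mid @ [bl, b0]"
  unfolding cycw_def by simp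
lemma L5: "cycw (b0 # mid) 0 = b0 # mid @ [b0]"
  unfolding cycw_def by simp
lemma L6: "cycw (b0 # mid @ [bl]) (Suc (length mid)) = [bl, b0] @ mid @ [bl]"
  unfolding cycw_def rotate_drop_take by (simp add: nth_append)
lemma L7: "cycw (mid @ [bl]) (length mid) = [bl] @ mid @ [bl]"
  unfolding cycw_def rotate_drop_take by (simp add: nth_append)

lemma valid_A: "a \<in> {1..n} \<Longrightarrow> set bs \<subseteq> {1..n} \<Longrightarrow> a \<notin> set bs \<Longrightarrow> \<forall>x\<in>set (map (\<lambda>b. (a,b)) bs). valid n x"
  by (auto simp: valid_def)

lemma cg_comb: "cg n x (p1 - p2) \<Longrightarrow> cg n p1 q1 \<Longrightarrow> cg n p2 q2 \<Longrightarrow> cg n x (q1 - q2)"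
  by (rule cg_trans, assumption, rule cg_diff)

lemma cyc_rel:
  assumes "a \<in> {1..n}" "set bs \<subseteq> {1..n}" "a \<notin> set bs" "distinct bs" "bs \<noteq> []"
  shows "(Scyc a bs :: 'k::comm_ring_1 ncpoly) \<in> fk_ideal n"
  using assms
proof (induction "length bs" arbitrary: bs rule: less_induct)
  case less
  show ?case
  proof (cases "length bs = 1")
    case True
    then obtain b where bs: "bs = [b]" by (metis One_nat_def length_0_conv length_Suc_conv)
    have "(Scyc a bs :: 'k ncpoly) = Y [(a,b),(a,b)]"
      unfolding Scyc_def bs cycw_def by simp
    moreover have "valid n (a,b)" using less.prems bs by (auto simp: valid_def)
    ultimately show ?thesis using rel_sq by metis
  next
    case False
    moreover have "length bs \<noteq> 0" using less.prems(5) by simp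
    ultimately have "length bs \<ge> 2" by linarith
    then obtain b0 mid bl where bs: "bs = b0 # mid @ [bl]"
      by (metis Suc_le_length_iff append_butlast_last_id list.simps(3) numeral_2_eq_2 le_refl)
    define k where "k = length mid"
    define A where "A = map (\<lambda>b::nat. (a,b))"
    define z where "z = (b0,bl)"
    have dist: "distinct (b0 # mid @ [bl])" using less.prems bs by simp
    have b0bl: "b0 \<noteq> bl" "b0 \<notin> set mid" "bl \<notin> set mid" using dist by auto
    have ab: "a \<noteq> b0" "a \<noteq> bl" "a \<notin> set mid" using less.prems bs by auto
    have rng: "b0 \<in> {1..n}" "bl \<in> {1..n}" "set mid \<subseteq> {1..n}" using less.prems bs by auto
    have vz: "valid n z" using b0bl rng by (auto simp: valid_def z_def)
    have vA: "\<forall>x\<in>set (A xs). valid n x" if "set xs \<subseteq> set bs" for xs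
      using that less.prems unfolding A_def by (auto simp: valid_def)
    have vAz: "\<forall>q\<in>set (A mid). valid n q \<and> {fst q, snd q} \<inter> {fst z, snd z} = {}"
      using vA[of mid] ab b0bl bs unfolding A_def z_def by auto
    have vmid: "\<forall>x\<in>set (A mid). valid n x" "\<forall>x\<in>set (A (drop t mid)). valid n x"
       "\<forall>x\<in>set (A (take t mid @ [mid ! t])). valid n x" if "t < k" for t
      using vA[of mid] vA[of "drop t mid"] vA[of "take t mid @ [mid ! t]"] that bs k_def
      by (auto dest: in_set_dropD in_set_takeD)
    have vA1: "\<forall>x\<in>set (A (b0 # mid)). valid n x" using vA[of "b0 # mid"] bs by auto
    have vA2: "\<forall>x\<in>set (A (mid @ [bl])). valid n x" using vA[of "mid @ [bl]"] bs by auto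
    have v0: "valid n (a,b0)" "valid n (a,bl)" using ab rng less.prems(1) by (auto simp: valid_def)
    have IH1: "(Scyc a (b0 # mid) :: 'k ncpoly) \<in> fk_ideal n"
      by (rule less.hyps) (use less.prems bs in auto)
    have IH2: "(Scyc a (mid @ [bl]) :: 'k ncpoly) \<in> fk_ideal n"
      by (rule less.hyps) (use less.prems bs in auto)
    define f where "f t = (Y (A (cycw bs t)) :: 'k ncpoly)" for t
    define h where "h t = (Y (A (cycw (b0 # mid) t)) :: 'k ncpoly)" for t
    define h' where "h' t = (Y (A (cycw (mid @ [bl]) t)) :: 'k ncpoly)" for t
    define Xt where "Xt = (Y ([(a,b0)] @ [z] @ A mid @ [(a,bl)]) :: 'k ncpoly)"
    have S1: "Scyc a bs = f 0 + (\<Sum>t<k. f (Suc t)) + f (Suc k)"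
    proof -
      have "Scyc a bs = (\<Sum>t<Suc (Suc k). f t)"
        unfolding Scyc_def f_def A_def using bs k_def by simp
      also have "\<dots> = (\<Sum>t<Suc k. f t) + f (Suc k)" by (rule sum.lessThan_Suc)
      also have "(\<Sum>t<Suc k. f t) = f 0 + (\<Sum>t<k. f (Suc t))" by (rule sum.lessThan_Suc_shift)
      finally show ?thesis .
    qed
    have S2: "Scyc a (b0 # mid) = h 0 + (\<Sum>t<k. h (Suc t))"
      unfolding Scyc_def h_def A_def k_def
      by (simp add: sum.lessThan_Suc_shift del: sum.lessThan_Suc)
    have S3: "Scyc a (mid @ [bl]) = (\<Sum>t<k. h' t) + h' k"
      unfolding Scyc_def h'_def A_def k_def by simp
    have c0: "cg n (f 0) (ctx [] (h 0) [z] - Xt)"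
    proof -
      have F1: "cg n (f 0) (Y (A (b0 # mid) @ [(a,b0),(b0,bl)] @ []) - Y (A (b0 # mid) @ [(b0,bl),(a,bl)] @ []))"
        using star_rel[of a b0 bl n "A (b0 # mid)" "[]"] ab b0bl rng vA1 less.prems(1)
        unfolding f_def bs L4 A_def by simp
      have F2: "Y (A (b0 # mid) @ [(a,b0),(b0,bl)] @ []) = ctx [] (h 0) [z]"
        unfolding h_def L5 ctx_Y A_def z_def by simp
      have F3: "cg n (Y (A (b0 # mid) @ [(b0,bl),(a,bl)] @ [])) Xt"
        using comm_move'[OF vz vAz, of "[(a,b0)]" "[(a,bl)]"] v0 unfolding Xt_def A_def z_def by simp
      show ?thesis by (rule cg_comb[OF F1 _ F3]) (simp only: F2 cg_refl)
    qed
    have ck: "cg n (f (Suc k)) (Xt - ctx [z] (h' k) [])"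
    proof -
      have F1: "cg n (f (Suc k)) (Y ([] @ [(a,b0),(b0,bl)] @ A (mid @ [bl])) - Y ([] @ [(b0,bl),(a,bl)] @ A (mid @ [bl])))"
        using star_rel[of a b0 bl n "[]" "A (mid @ [bl])"] ab b0bl rng vA2 less.prems(1)
        unfolding f_def bs k_def L6 A_def by simp
      have F2: "Y ([] @ [(a,b0),(b0,bl)] @ A (mid @ [bl])) = Xt"
        unfolding Xt_def A_def z_def by simp
      have F3: "Y ([] @ [(b0,bl),(a,bl)] @ A (mid @ [bl])) = ctx [z] (h' k) []"
        unfolding h'_def k_def L7 ctx_Y A_def z_def by simp
      show ?thesis by (rule cg_comb[OF F1]) (simp_all only: F2 F3 cg_refl)
    qed
    have cm: "cg n (f (Suc t)) (ctx [] (h (Suc t)) [z] - ctx [z] (h' t) [])" if t: "t < k" for t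
    proof -
      define P where "P = drop t mid"
      define Q where "Q = take t mid @ [mid ! t]"
      have vP: "\<forall>x\<in>set (A P). valid n x" and vQ: "\<forall>x\<in>set (A Q). valid n x"
        using vmid[OF t] unfolding P_def Q_def by auto
      have vPz: "\<forall>q\<in>set (A P). valid n q \<and> {fst q, snd q} \<inter> {fst z, snd z} = {}"
        using vAz unfolding P_def A_def by (auto dest: in_set_dropD)
      have vQz: "\<forall>q\<in>set (A Q). valid n q \<and> {fst q, snd q} \<inter> {fst z, snd z} = {}"
        using vAz t k_def unfolding Q_def A_def by (auto dest: in_set_takeD)
      have e1: "cycw bs (Suc t) = P @ [bl, b0] @ Q" unfolding bs P_def Q_def using L1 t k_def by simp
      have e2: "cycw (b0 # mid) (Suc t) = P @ [b0] @ Q" unfolding P_def Q_def using L2 t k_def by simp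
      have e3: "cycw (mid @ [bl]) t = P @ [bl] @ Q" unfolding P_def Q_def using L3 t k_def by simp
      have F1: "cg n (f (Suc t)) (Y (A P @ [(a,b0),(b0,bl)] @ A Q) - Y (A P @ [(b0,bl),(a,bl)] @ A Q))"
        using star_rel[of a b0 bl n "A P" "A Q"] ab b0bl rng vP vQ less.prems(1)
        unfolding f_def e1 A_def by simp
      have F2: "cg n (Y (A P @ [(a,b0),(b0,bl)] @ A Q)) (ctx [] (h (Suc t)) [z])"
        using comm_move[OF vz vQz, of "A P @ [(a,b0)]" "[]"] vP v0
        unfolding h_def e2 ctx_Y A_def z_def by simp
      have F3: "cg n (Y (A P @ [(b0,bl),(a,bl)] @ A Q)) (ctx [z] (h' t) [])"
        using comm_move'[OF vz vPz, of "[]" "(a,bl) # A Q"] vQ v0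
        unfolding h'_def e3 ctx_Y A_def z_def by simp
      show ?thesis by (rule cg_comb[OF F1 F2 F3])
    qed
    have "cg n (Scyc a bs) ((ctx [] (h 0) [z] - Xt) + (\<Sum>t<k. ctx [] (h (Suc t)) [z] - ctx [z] (h' t) []) + (Xt - ctx [z] (h' k) []))"
      unfolding S1 by (intro cg_add c0 ck cg_sum cm) simp
    moreover have "(ctx [] (h 0) [z] - Xt) + (\<Sum>t<k. ctx [] (h (Suc t)) [z] - ctx [z] (h' t) []) + (Xt - ctx [z] (h' k) [])
        = (ctx [] (Scyc a (b0 # mid)) [z] - ctx [z] (Scyc a (mid @ [bl])) [] :: 'k ncpoly)"
      unfolding S2 S3 ctx_add ctx_sum sum_subtractf by (simp add: algebra_simps)
    moreover have "(ctx [] (Scyc a (b0 # mid)) [z] - ctx [z] (Scyc a (mid @ [bl])) [] :: 'k ncpoly) \<in> fk_ideal n"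
      by (rule I_diff; rule ctx_I) (use vz IH1 IH2 in auto)
    ultimately have "(Scyc a bs :: 'k ncpoly) - (ctx [] (Scyc a (b0 # mid)) [z] - ctx [z] (Scyc a (mid @ [bl])) []) \<in> fk_ideal n"
        "(ctx [] (Scyc a (b0 # mid)) [z] - ctx [z] (Scyc a (mid @ [bl])) [] :: 'k ncpoly) \<in> fk_ideal n"
      unfolding cg_def by simp_all
    from I_add[OF this] show ?thesis by simp
  qed
qed

definition closed_trail :: "gen set \<Rightarrow> (nat \<Rightarrow> nat) \<Rightarrow> nat \<Rightarrow> bool" where
  "closed_trail E w L \<longleftrightarrow> 1 \<le> L \<and> w L = w 0 \<and>
     (\<forall>i<L. w i = w (Suc i) \<or> adj E (w i) (w (Suc i))) \<and>
     (\<forall>i<L. \<forall>j<L. i \<noteq> j \<and> w i \<noteq> w (Suc i) \<and> w j \<noteq> w (Suc j) \<longrightarrow>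
         ed (w i) (w (Suc i)) \<noteq> ed (w j) (w (Suc j))) \<and>
     (\<exists>i<L. w i \<noteq> w (Suc i))"

lemma no_closed_trail:
  assumes "acyclic_graph E"
  shows "\<not> closed_trail E w L"
proof (induction L arbitrary: w rule: less_induct)
  case (less L)
  show ?case
  proof
    assume ct: "closed_trail E w L"
    then have L1: "1 \<le> L" and wL: "w L = w 0"
      and st: "\<And>i. i < L \<Longrightarrow> w i = w (Suc i) \<or> adj E (w i) (w (Suc i))"
      and de: "\<And>i j. i < L \<Longrightarrow> j < L \<Longrightarrow> i \<noteq> j \<Longrightarrow> w i \<noteq> w (Suc i) \<Longrightarrow> w j \<noteq> w (Suc j) \<Longrightarrow>
         ed (w i) (w (Suc i)) \<noteq> ed (w j) (w (Suc j))"
      and ne: "\<exists>i<L. w i \<noteq> w (Suc i)"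
      unfolding closed_trail_def by blast+
    show False
    proof (cases "\<exists>i<L. w i = w (Suc i)")
      case True
      then obtain i where i: "i < L" "w i = w (Suc i)" by blast
      from ne obtain k where k: "k < L" "w k \<noteq> w (Suc k)" by blast
      have ki: "k \<noteq> i" using i k by auto
      show False
      proof (cases "Suc i < L")
        case True
        define w' where "w' j = (if j \<le> i then w j else w (Suc j))" for j
        define \<sigma> where "\<sigma> j = (if j < i then j else Suc j)" for j
        have step: "w' j = w (\<sigma> j) \<and> w' (Suc j) = w (Suc (\<sigma> j))" for j
          unfolding w'_def \<sigma>_def using i by (cases "j < i"; cases "j = i") auto
        have "closed_trail E w' (L - 1)"
          unfolding closed_trail_def
        proof (intro conjI allI impI)
          show "1 \<le> L - 1" using True i k by linarith
          show "w' (L - 1) = w' 0" using True wL unfolding w'_def by auto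
        next
          fix j assume "j < L - 1"
          then have "\<sigma> j < L" unfolding \<sigma>_def by auto
          then show "w' j = w' (Suc j) \<or> adj E (w' j) (w' (Suc j))" using st step by metis
        next
          fix i' j assume "i' < L - 1" "j < L - 1" and h: "i' \<noteq> j \<and> w' i' \<noteq> w' (Suc i') \<and> w' j \<noteq> w' (Suc j)"
          then have "\<sigma> i' < L" "\<sigma> j < L" "\<sigma> i' \<noteq> \<sigma> j" unfolding \<sigma>_def by auto
          then show "ed (w' i') (w' (Suc i')) \<noteq> ed (w' j) (w' (Suc j))"
            using de h step by metis
        next
          define j where "j = (if k < i then k else k - 1)"
          have "\<sigma> j = k" unfolding j_def \<sigma>_def using ki by auto
          moreover have "j < L - 1" unfolding j_def using k ki True by auto
          ultimately show "\<exists>i<L - 1. w' i \<noteq> w' (Suc i)" using step k by metis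
        qed
        then show False using less.IH[of "L - 1" w'] L1 True by linarith
      next
        case False
        then have iL: "i = L - 1" using i by linarith
        have "closed_trail E w (L - 1)"
          unfolding closed_trail_def
        proof (intro conjI allI impI)
          show "1 \<le> L - 1" using k ki iL by linarith
          show "w (L - 1) = w 0" using i iL wL L1 by (metis Suc_diff_1 less_le_trans zero_less_one)
        next
          fix j assume "j < L - 1"
          then show "w j = w (Suc j) \<or> adj E (w j) (w (Suc j))" using st by simp
        next
          fix i' j assume "i' < L - 1" "j < L - 1" "i' \<noteq> j \<and> w i' \<noteq> w (Suc i') \<and> w j \<noteq> w (Suc j)"
          then show "ed (w i') (w (Suc i')) \<noteq> ed (w j) (w (Suc j))" using de by simp
        next
          show "\<exists>i<L - 1. w i \<noteq> w (Suc i)" using k ki iL by (intro exI[of _ k]) auto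
        qed
        then show False using less.IH[of "L - 1" w] L1 by linarith
      qed
    next
      case False
      then have adjs: "\<And>i. i < L \<Longrightarrow> adj E (w i) (w (Suc i))" using st by blast
      show False
      proof (cases "inj_on w {..<L}")
        case True
        consider "L = 1" | "L = 2" | "3 \<le> L" using L1 by linarith
        then show False
        proof cases
          case 1
          then show False using adjs[of 0] wL by (simp add: adj_def)
        next
          case 2
          have "ed (w 0) (w 1) \<noteq> ed (w 1) (w 2)" using de[of 0 1] False 2 by (simp add: numeral_2_eq_2)
          then show False using wL 2 by (simp add: ed_def min.commute max.commute)
        next
          case 3
          define vs where "vs = map w [0..<L]"
          have "3 \<le> length vs" "distinct vs" using 3 True unfolding vs_def by (auto simp: distinct_map lessThan_atLeast0)
          moreover have "\<forall>i<length vs. adj E (vs ! i) (vs ! ((i + 1) mod length vs))"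
          proof (intro allI impI)
            fix i assume i: "i < length vs"
            show "adj E (vs ! i) (vs ! ((i + 1) mod length vs))"
            proof (cases "Suc i < L")
              case True
              then show ?thesis using adjs[of i] i unfolding vs_def by simp
            next
              case False
              then have "Suc i = L" using i unfolding vs_def by simp
              then show ?thesis using adjs[of i] i wL unfolding vs_def by simp
            qed
          qed
          ultimately show False using assms unfolding acyclic_graph_def by blast
        qed
      next
        case False
        then obtain a b where ab: "a < L" "b < L" "a \<noteq> b" "w a = w b" unfolding inj_on_def by blast
        then obtain a b where ab: "a < b" "b < L" "w a = w b" by (metis linorder_neqE_nat)
        define w' where "w' j = w (a + j)" for j
        have "closed_trail E w' (b - a)"
          unfolding closed_trail_def
        proof (intro conjI allI impI)
          show "1 \<le> b - a" using ab by simp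
          show "w' (b - a) = w' 0" unfolding w'_def using ab by simp
        next
          fix j assume "j < b - a"
          then show "w' j = w' (Suc j) \<or> adj E (w' j) (w' (Suc j))" using adjs[of "a + j"] ab unfolding w'_def by simp
        next
          fix i' j assume "i' < b - a" "j < b - a" "i' \<noteq> j \<and> w' i' \<noteq> w' (Suc i') \<and> w' j \<noteq> w' (Suc j)"
          then show "ed (w' i') (w' (Suc i')) \<noteq> ed (w' j) (w' (Suc j))"
            using de[of "a + i'" "a + j"] ab unfolding w'_def by simp
        next
          show "\<exists>i<b - a. w' i \<noteq> w' (Suc i)" using adjs[of a] ab unfolding w'_def adj_def
            by (intro exI[of _ 0]) auto
        qed
        then show False using less.IH[of "b - a" w'] ab by linarith
      qed
    qed
  qed
qed

definition ends :: "gen \<Rightarrow> nat set" where "ends e = {fst e, snd e}"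

lemma line_cycle_common:
  assumes acyc: "acyclic_graph E" and Eg: "\<forall>e\<in>E. fst e < snd e"
    and g: "1 \<le> g" and fE: "\<forall>s<g. f s \<in> E" and inj: "inj_on f {..<g}"
    and sh: "\<forall>s<g. ends (f s) \<inter> ends (f (Suc s mod g)) \<noteq> {}"
  shows "\<exists>v. \<forall>s<g. v \<in> ends (f s)"
proof -
  define vsh where "vsh s = (SOME v. v \<in> ends (f s) \<and> v \<in> ends (f (Suc s mod g)))" for s
  have vsh: "vsh s \<in> ends (f s) \<and> vsh s \<in> ends (f (Suc s mod g))" if "s < g" for s
    unfolding vsh_def using sh that by (metis (no_types, lifting) disjoint_iff someI_ex)
  define w where "w s = vsh (s mod g)" for s
  show ?thesis
  proof (cases "\<exists>i<g. w i \<noteq> w (Suc i)")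
    case False
    have wc: "w s = w 0" if "s \<le> g" for s
      using that False by (induction s) auto
    have vs: "vsh s = vsh 0" if "s < g" for s using wc[of s] that unfolding w_def by simp
    show ?thesis
    proof (intro exI allI impI)
      fix s assume "s < g"
      then show "vsh 0 \<in> ends (f s)" using vsh[of s] vs[of s] by simp
    qed
  next
    case True
    have stepf: "w i \<in> ends (f (Suc i mod g)) \<and> w (Suc i) \<in> ends (f (Suc i mod g))" if "i < g" for i
      unfolding w_def using vsh[of i] vsh[of "Suc i mod g"] that g by auto
    have edf: "w i \<noteq> w (Suc i) \<Longrightarrow> ed (w i) (w (Suc i)) = f (Suc i mod g)" if "i < g" for i
    proof -
      assume ne: "w i \<noteq> w (Suc i)"
      have "f (Suc i mod g) \<in> E" using fE g by auto
      then have "fst (f (Suc i mod g)) < snd (f (Suc i mod g))" using Eg by auto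
      then show ?thesis using stepf[OF that] ne unfolding ends_def ed_def
        by (cases "f (Suc i mod g)") (auto simp: min_def max_def)
    qed
    have "closed_trail E w g"
      unfolding closed_trail_def
    proof (intro conjI allI impI)
      show "1 \<le> g" by (rule g)
      show "w g = w 0" unfolding w_def by simp
    next
      fix i assume i: "i < g"
      show "w i = w (Suc i) \<or> adj E (w i) (w (Suc i))"
      proof (cases "w i = w (Suc i)")
        case False
        have "f (Suc i mod g) \<in> E" using fE g by auto
        then show ?thesis using edf[OF i False] False unfolding adj_def ed_def by auto
      qed simp
    next
      fix i j assume ij: "i < g" "j < g" "i \<noteq> j \<and> w i \<noteq> w (Suc i) \<and> w j \<noteq> w (Suc j)"
      have md: "Suc x mod g = (if Suc x = g then 0 else Suc x)" if "x < g" for x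
        using that by (cases "Suc x = g") auto
      have ne: "Suc i mod g \<noteq> Suc j mod g" using md[of i] md[of j] ij by auto
      have lt: "Suc i mod g < g" "Suc j mod g < g" using g by auto
      have "f (Suc i mod g) \<noteq> f (Suc j mod g)"
        using inj ne lt unfolding inj_on_def by blast
      then show "ed (w i) (w (Suc i)) \<noteq> ed (w j) (w (Suc j))"
        using edf[of i] edf[of j] ij by simp
    next
      show "\<exists>i<g. w i \<noteq> w (Suc i)" by (rule True)
    qed
    then show ?thesis using no_closed_trail[OF acyc] by blast
  qed
qed

lemma wcoef_snoc: "wcoef c i (w @ [a]) = wcoef c (Suc i) w * c i a"
  by (induction w) (auto simp: algebra_simps)

lemma wcoef_map_rev: "wcoef c i (map F (rev [0..<L])) = (\<Prod>s<L. c (i + s) (F s))"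
  by (induction L) (auto simp: algebra_simps)

lemma Y_apply: "(Y ps :: 'k::comm_ring_1 ncpoly) w =
   (if w = map (\<lambda>(u,v). ed u v) ps then prod_list (map (\<lambda>(u,v). sg u v) ps) else 0)"
  unfolding Y_def nc_smult_def nc_word_def by simp

lemma sum_Y_eval:
  assumes "finite W" "map (\<lambda>(u,v). ed u v) ps \<in> W"
  shows "(\<Sum>w\<in>W. (Y ps :: 'k::comm_ring_1 ncpoly) w * F w) =
     prod_list (map (\<lambda>(u,v). sg u v) ps) * F (map (\<lambda>(u,v). ed u v) ps)"
proof -
  have "(\<Sum>w\<in>W. (Y ps :: 'k ncpoly) w * F w) =
     (\<Sum>w\<in>W. if w = map (\<lambda>(u,v). ed u v) ps then prod_list (map (\<lambda>(u,v). sg u v) ps) * F w else 0)"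
    by (rule sum.cong) (auto simp: Y_apply)
  also have "\<dots> = prod_list (map (\<lambda>(u,v). sg u v) ps) * F (map (\<lambda>(u,v). ed u v) ps)"
    using assms by (simp add: sum.delta')
  finally show ?thesis .
qed

lemma sg_nonzero: "prod_list (map (\<lambda>(u,v). sg u v) ps) \<noteq> (0 :: 'k::field)"
  by (induction ps) (auto simp: sg_def split: if_splits)

lemma Scyc_apply: "(Scyc a bs :: 'k::comm_ring_1 ncpoly) w = (\<Sum>t<length bs. Y (map (\<lambda>b. (a,b)) (cycw bs t)) w)"
  unfolding Scyc_def by (rule sum_fun_apply')

lemma Scyc_support:
  assumes "(Scyc a bs :: 'k::comm_ring_1 ncpoly) w \<noteq> 0"
  shows "\<exists>t<length bs. w = map (ed a) (cycw bs t)"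
proof (rule ccontr)
  assume "\<not> ?thesis"
  then have "\<forall>t<length bs. (Y (map (\<lambda>b. (a,b)) (cycw bs t)) :: 'k ncpoly) w = 0"
    by (auto simp: Y_apply comp_def)
  then show False using assms by (simp add: Scyc_apply)
qed

lemma set_cycw: "t < length bs \<Longrightarrow> set (cycw bs t) \<subseteq> set bs"
  unfolding cycw_def by auto

lemma sum_Scyc_eval:
  assumes "finite W" "\<And>t. t < length bs \<Longrightarrow> map (ed a) (cycw bs t) \<in> W"
  shows "(\<Sum>w\<in>W. (Scyc a bs :: 'k::comm_ring_1 ncpoly) w * F w) =
     (\<Sum>t<length bs. prod_list (map (\<lambda>b. sg a b) (cycw bs t)) * F (map (ed a) (cycw bs t)))"
proof -
  have "(\<Sum>w\<in>W. (Scyc a bs :: 'k ncpoly) w * F w) = (\<Sum>w\<in>W. \<Sum>t<length bs. (Y (map (\<lambda>b. (a,b)) (cycw bs t)) :: 'k ncpoly) w * F w)"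
    by (simp add: Scyc_apply sum_distrib_right)
  also have "\<dots> = (\<Sum>t<length bs. \<Sum>w\<in>W. (Y (map (\<lambda>b. (a,b)) (cycw bs t)) :: 'k ncpoly) w * F w)"
    by (rule sum.swap)
  also have "\<dots> = (\<Sum>t<length bs. prod_list (map (\<lambda>b. sg a b) (cycw bs t)) * F (map (ed a) (cycw bs t)))"
  proof (rule sum.cong[OF refl])
    fix t assume "t \<in> {..<length bs}"
    then show "(\<Sum>w\<in>W. (Y (map (\<lambda>b. (a,b)) (cycw bs t)) :: 'k ncpoly) w * F w) = prod_list (map (\<lambda>b. sg a b) (cycw bs t)) * F (map (ed a) (cycw bs t))"
      using sum_Y_eval[of W "map (\<lambda>b. (a,b)) (cycw bs t)" F] assms by (simp add: comp_def)
  qed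
  finally show ?thesis .
qed

lemma finite_gens: "finite (gens n)"
proof -
  have "gens n \<subseteq> {1..n} \<times> {1..n}" unfolding gens_def by auto
  then show ?thesis by (rule finite_subset) auto
qed

lemma gens_lt: "x \<in> gens n \<Longrightarrow> fst x < snd x \<and> 1 \<le> fst x \<and> snd x \<le> n"
  unfolding gens_def by auto

lemma sum_word_eval: "finite W \<Longrightarrow> u \<in> W \<Longrightarrow> (\<Sum>w\<in>W. (nc_word u w :: 'k::comm_ring_1) * F w) = F u"
proof -
  assume "finite W" "u \<in> W"
  have "(\<Sum>w\<in>W. (nc_word u w :: 'k) * F w) = (\<Sum>w\<in>W. if u = w then F w else 0)"
    by (rule sum.cong) (auto simp: nc_word_def)
  then show ?thesis using \<open>finite W\<close> \<open>u \<in> W\<close> by simp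
qed

context
  fixes n :: nat and E :: "gen set" and d :: nat and c :: "nat \<Rightarrow> gen \<Rightarrow> 'k::field"
  assumes tree: "is_tree n E" and pm: "truncated_point_module n E d c"
begin

lemma EG: "E \<subseteq> gens n" using tree unfolding is_tree_def by blast
lemma finE: "finite E" using finite_subset[OF EG finite_gens] .
lemma acyc: "acyclic_graph E" using tree unfolding is_tree_def by blast

lemma kern: "p \<in> fkG_kernel n E \<Longrightarrow> i \<le> d \<Longrightarrow>
   (\<Sum>w\<in>{w. set w \<subseteq> E \<and> length w = l}. p w * wcoef c i w) = 0"
  using pm unfolding truncated_point_module_def by blast

lemma nonempty: "j < d \<Longrightarrow> \<exists>a\<in>E. c j a \<noteq> 0"
proof -
  assume j: "j < d"
  then obtain w where w: "set w \<subseteq> E" "length w = Suc j" "wcoef c 0 w \<noteq> 0"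
    using pm unfolding truncated_point_module_def by (metis Suc_leI)
  then obtain a w' where aw: "w = a # w'" by (cases w) auto
  then have "c j a \<noteq> 0" using w by auto
  then show ?thesis using w aw by auto
qed

lemma claimA:
  assumes m: "m < d" and x: "x \<in> E" and y: "y \<in> E" and cx: "c (Suc m) x \<noteq> 0" and cy: "c m y \<noteq> 0"
    and dis: "\<forall>e\<in>E. c m e = 0 \<or> c (Suc m) e = 0"
  shows "ends x \<inter> ends y \<noteq> {}"
proof
  assume dj: "ends x \<inter> ends y = {}"
  obtain p q where xpq: "x = (p,q)" by fastforce
  obtain r s where yrs: "y = (r,s)" by fastforce
  have "(nc_sub (nc_word [x,y]) (nc_word [y,x]) :: 'k ncpoly) \<in> fk_relators n"
    unfolding fk_relators_def
    by (rule UnI1, rule UnI1, rule UnI2, rule CollectI, rule exI[of _ p], rule exI[of _ q],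
        rule exI[of _ r], rule exI[of _ s]) (intro conjI refl; use dj x y EG xpq yrs in \<open>auto simp: ends_def\<close>)
  then have "(nc_sub (nc_word [x,y]) (nc_word [y,x]) :: 'k ncpoly) \<in> fkG_kernel n E"
    unfolding fkG_kernel_def using x y by (auto intro: fk_ideal.rel simp: nc_sub_def nc_word_def split: if_splits)
  from kern[OF this, of m 2] m
  have "(\<Sum>w\<in>{w. set w \<subseteq> E \<and> length w = 2}. (nc_word [x,y] w - nc_word [y,x] w) * wcoef c m w) = (0::'k)"
    by (simp add: nc_sub_def)
  moreover have "(\<Sum>w\<in>{w. set w \<subseteq> E \<and> length w = 2}. (nc_word [x,y] w - nc_word [y,x] w) * wcoef c m w)
     = wcoef c m [x,y] - wcoef c m [y,x]"
  proof -
    have fin: "finite {w. set w \<subseteq> E \<and> length w = 2}" using finE by (rule finite_lists_length_eq)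
    have "(\<Sum>w\<in>{w. set w \<subseteq> E \<and> length w = 2}. (nc_word [x,y] w - nc_word [y,x] w) * wcoef c m w)
       = (\<Sum>w\<in>{w. set w \<subseteq> E \<and> length w = 2}. nc_word [x,y] w * wcoef c m w)
         - (\<Sum>w\<in>{w. set w \<subseteq> E \<and> length w = 2}. nc_word [y,x] w * wcoef c m w)"
      by (simp only: left_diff_distrib sum_subtractf)
    also have "\<dots> = wcoef c m [x,y] - wcoef c m [y,x]"
      using sum_word_eval[OF fin, of "[x,y]" "wcoef c m"] sum_word_eval[OF fin, of "[y,x]" "wcoef c m"] x y
      by simp
    finally show ?thesis .
  qed
  ultimately have "c (Suc m) x * c m y = c (Suc m) y * c m x" by simp
  then have "c m x \<noteq> 0" "c (Suc m) x \<noteq> 0" using cx cy by auto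
  then show False using dis x by auto
qed

lemma disj_gap:
  "1 \<le> g \<Longrightarrow> j + g < d \<Longrightarrow> e \<in> E \<Longrightarrow> c j e = 0 \<or> c (j + g) e = 0"
proof (induction g arbitrary: j e rule: less_induct)
  case (less g)
  show ?case
  proof (rule ccontr)
    assume "\<not> (c j e = 0 \<or> c (j + g) e = 0)"
    then have ce0: "c j e \<noteq> 0" and ceg: "c (j + g) e \<noteq> 0" by auto
    have g1: "1 \<le> g" and jg: "j + g < d" and eE: "e \<in> E" using less.prems by auto
    have IH: "\<And>g' j' e'. g' < g \<Longrightarrow> 1 \<le> g' \<Longrightarrow> j' + g' < d \<Longrightarrow> e' \<in> E \<Longrightarrow> c j' e' = 0 \<or> c (j' + g') e' = 0"
      using less.IH by blast
    define f where "f s = (if s = 0 then e else SOME a. a \<in> E \<and> c (j + s) a \<noteq> 0)" for s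
    have fP: "f s \<in> E \<and> c (j + s) (f s) \<noteq> 0" if "s < g" for s
    proof (cases "s = 0")
      case True then show ?thesis using eE ce0 unfolding f_def by simp
    next
      case False
      have "\<exists>a. a \<in> E \<and> c (j + s) a \<noteq> 0" using nonempty[of "j + s"] that jg by auto
      from someI_ex[OF this] show ?thesis unfolding f_def using False by simp
    qed
    have finj: "inj_on f {..<g}"
    proof (rule inj_onI)
      fix s s' assume s: "s \<in> {..<g}" and s': "s' \<in> {..<g}" and eq: "f s = f s'"
      show "s = s'"
      proof (rule ccontr)
        assume "s \<noteq> s'"
        then consider "s < s'" | "s' < s" by linarith
        then show False
        proof cases
          case 1
          have "c (j + s) (f s) = 0 \<or> c (j + s + (s' - s)) (f s) = 0"
            using IH[of "s' - s" "j + s" "f s"] 1 s s' jg fP[of s] by auto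
          then show False using fP[of s] fP[of s'] eq 1 s s' by auto
        next
          case 2
          have "c (j + s') (f s') = 0 \<or> c (j + s' + (s - s')) (f s') = 0"
            using IH[of "s - s'" "j + s'" "f s'"] 2 s s' jg fP[of s'] by auto
          then show False using fP[of s] fP[of s'] eq 2 s s' by auto
        qed
      qed
    qed
    have gap1: "\<forall>e'\<in>E. c m e' = 0 \<or> c (Suc m) e' = 0" if "1 < g" "Suc m < d" for m
      using IH[of 1 m] that by auto
    have sh: "\<forall>s<g. ends (f s) \<inter> ends (f (Suc s mod g)) \<noteq> {}"
    proof (intro allI impI)
      fix s assume s: "s < g"
      show "ends (f s) \<inter> ends (f (Suc s mod g)) \<noteq> {}"
      proof (cases "Suc s < g")
        case True
        have "ends (f (Suc s)) \<inter> ends (f s) \<noteq> {}"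
          using claimA[of "j + s" "f (Suc s)" "f s"] fP[of s] fP[of "Suc s"] True jg gap1[of "j + s"]
          by auto
        then show ?thesis using True by (auto simp: Int_commute)
      next
        case False
        then have sg: "Suc s = g" using s by simp
        show ?thesis
        proof (cases "g = 1")
          case True
          then show ?thesis using sg by (auto simp: ends_def)
        next
          case False
          then have "1 < g" using g1 by simp
          have "ends (f 0) \<inter> ends (f s) \<noteq> {}"
            using claimA[of "j + s" "f 0" "f s"] fP[of s] fP[of 0] sg jg gap1[of "j + s"] \<open>1 < g\<close> ceg
            unfolding f_def by auto
          then show ?thesis using sg by (auto simp: Int_commute)
        qed
      qed
    qed
    have Eg: "\<forall>e\<in>E. fst e < snd e" using EG gens_lt by blast
    obtain a where a: "\<forall>s<g. a \<in> ends (f s)"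
      using line_cycle_common[OF acyc Eg g1 _ finj sh] fP by blast
    define ob where "ob s = (if fst (f s) = a then snd (f s) else fst (f s))" for s
    have fob: "f s = ed a (ob s) \<and> ob s \<noteq> a \<and> ob s \<in> {1..n}" if "s < g" for s
    proof -
      have "f s \<in> gens n" using fP[OF that] EG by auto
      then have "fst (f s) < snd (f s)" "1 \<le> fst (f s)" "snd (f s) \<le> n" using gens_lt by auto
      moreover have "a \<in> ends (f s)" using a that by auto
      ultimately show ?thesis unfolding ob_def ed_def ends_def
        by (cases "f s") (auto simp: min_def max_def)
    qed
    have arng: "a \<in> {1..n}"
    proof -
      have "f 0 \<in> gens n" using fP[of 0] g1 EG by auto
      moreover have "a \<in> ends (f 0)" using a g1 by auto
      ultimately show ?thesis using gens_lt[of "f 0" n] unfolding ends_def by auto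
    qed
    define bs where "bs = map (\<lambda>t. ob ((g - t) mod g)) [0..<g]"
    have lbs: "length bs = g" unfolding bs_def by simp
    have bsn: "bs ! t = ob ((g - t) mod g)" if "t < g" for t unfolding bs_def using that by simp
    have mlt: "(g - t) mod g < g" for t using g1 by auto
    have obinj: "inj_on ob {..<g}"
      using finj fob unfolding inj_on_def by (metis lessThan_iff)
    have md: "(g - t) mod g = (if t = 0 then 0 else g - t)" if "t < g" for t
      using that by (cases "t = 0") auto
    have obinj': "ob x = ob y \<Longrightarrow> x < g \<Longrightarrow> y < g \<Longrightarrow> x = y" for x y
      using obinj unfolding inj_on_def by blast
    have dbs: "distinct bs"
      unfolding bs_def distinct_map
    proof (intro conjI inj_onI)
      fix t t' assume t: "t \<in> set [0..<g]" "t' \<in> set [0..<g]" and eq: "ob ((g - t) mod g) = ob ((g - t') mod g)"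
      then have "(g - t) mod g = (g - t') mod g" using obinj' mlt by blast
      then show "t = t'" using md[of t] md[of t'] t by (auto split: if_splits)
    qed simp
    have bsE: "ed a b \<in> E" if "b \<in> set bs" for b
    proof -
      have "b \<in> (\<lambda>t. ob ((g - t) mod g)) ` {0..<g}" using that unfolding bs_def by simp
      then obtain t where "t < g" "b = ob ((g - t) mod g)" by auto
      then show ?thesis using fob[of "(g - t) mod g"] fP[of "(g - t) mod g"] mlt by auto
    qed
    have bsrng: "set bs \<subseteq> {1..n}" "a \<notin> set bs"
      using fob mlt unfolding bs_def by auto
    have bsne: "bs \<noteq> []" using lbs g1 by auto
    have SI: "(Scyc a bs :: 'k ncpoly) \<in> fk_ideal n"
      by (rule cyc_rel) (use arng bsrng dbs bsne in auto)
    have SK: "(Scyc a bs :: 'k ncpoly) \<in> fkG_kernel n E"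
      unfolding fkG_kernel_def
    proof (intro CollectI conjI allI impI SI)
      fix w assume "(Scyc a bs :: 'k ncpoly) w \<noteq> 0"
      then obtain t where t: "t < length bs" "w = map (ed a) (cycw bs t)" using Scyc_support by blast
      then show "w \<in> lists E" using set_cycw[OF t(1)] bsE by (auto simp del: ed_def) (meson subsetD)
    qed
    define W where "W = {w. set w \<subseteq> E \<and> length w = Suc g}"
    have finW: "finite W" unfolding W_def using finE by (rule finite_lists_length_eq)
    have inW: "map (ed a) (cycw bs t) \<in> W" if "t < length bs" for t
      using set_cycw[OF that] bsE lbs unfolding W_def cycw_def by auto
    have "(\<Sum>w\<in>W. (Scyc a bs :: 'k ncpoly) w * wcoef c j w) = 0"
      unfolding W_def using kern[OF SK, of j] jg by simp
    moreover have "(\<Sum>w\<in>W. (Scyc a bs :: 'k ncpoly) w * wcoef c j w) =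
       (\<Sum>t<length bs. prod_list (map (\<lambda>b. sg a b) (cycw bs t)) * wcoef c j (map (ed a) (cycw bs t)))"
      by (rule sum_Scyc_eval[OF finW inW])
    moreover have "(\<Sum>t<length bs. prod_list (map (\<lambda>b. sg a b) (cycw bs t)) * wcoef c j (map (ed a) (cycw bs t)))
       = prod_list (map (\<lambda>b. sg a b) (cycw bs 0)) * wcoef c j (map (ed a) (cycw bs 0))"
    proof -
      let ?h = "\<lambda>t. prod_list (map (\<lambda>b. sg a b) (cycw bs t)) * wcoef c j (map (ed a) (cycw bs t)) :: 'k"
      have z: "?h t = 0" if t: "t \<in> {..<length bs} - {0}" for t
      proof -
        have t0: "0 < t" "t < g" using t lbs by auto
        have "ed a (bs ! t) = f (g - t)" using bsn[of t] md[of t] fob[of "g - t"] t0 by auto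
        moreover have "c j (f (g - t)) = 0"
          using IH[of "g - t" j "f (g - t)"] fP[of "g - t"] t0 jg by auto
        ultimately have "c j (ed a (bs ! t)) = 0" by simp
        then show ?thesis unfolding cycw_def by (simp add: wcoef_snoc)
      qed
      have "(\<Sum>t<length bs. ?h t) = ?h 0 + (\<Sum>t\<in>{..<length bs} - {0}. ?h t)"
        using bsne by (subst sum.remove[of _ 0]) auto
      also have "(\<Sum>t\<in>{..<length bs} - {0}. ?h t) = 0" using z by (intro sum.neutral) blast
      finally show ?thesis by simp
    qed
    moreover have "prod_list (map (\<lambda>b. sg a b) (cycw bs 0)) * wcoef c j (map (ed a) (cycw bs 0)) \<noteq> (0::'k)"
    proof -
      have "prod_list (map (\<lambda>b. sg a b) (cycw bs 0)) \<noteq> (0::'k)"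
        using sg_nonzero[of "map (\<lambda>b. (a,b)) (cycw bs 0)"] by (simp add: comp_def)
      moreover have w0: "map (ed a) (cycw bs 0) = map (\<lambda>s. f (s mod g)) (rev [0..<Suc g])"
      proof (rule nth_equalityI)
        show "length (map (ed a) (cycw bs 0)) = length (map (\<lambda>s. f (s mod g)) (rev [0..<Suc g]))"
          unfolding cycw_def using lbs by simp
      next
        fix t assume "t < length (map (ed a) (cycw bs 0))"
        then have t: "t \<le> g" unfolding cycw_def using lbs by simp
        have r: "map (\<lambda>s. f (s mod g)) (rev [0..<Suc g]) ! t = f ((g - t) mod g)"
          using t by (simp add: rev_nth del: upt_Suc)
        show "map (ed a) (cycw bs 0) ! t = map (\<lambda>s. f (s mod g)) (rev [0..<Suc g]) ! t"
        proof (cases "t < g")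
          case True
          then show ?thesis unfolding r unfolding cycw_def using lbs bsn[of t] fob[of "(g - t) mod g"] mlt[of t]
            by (simp add: nth_append)
        next
          case False
          then have "t = g" using t by simp
          then show ?thesis unfolding r unfolding cycw_def using lbs bsn[of 0] fob[of 0] g1
            by (simp add: nth_append)
        qed
      qed
      have fac: "\<forall>s\<in>{..<Suc g}. c (j + s) (f (s mod g)) \<noteq> 0"
      proof
        fix s assume "s \<in> {..<Suc g}"
        then consider "s < g" | "s = g" by fastforce
        then show "c (j + s) (f (s mod g)) \<noteq> 0"
        proof cases
          case 1 then show ?thesis using fP[of s] by simp
        next
          case 2 then show ?thesis using ceg unfolding f_def by simp
        qed
      qed
      have "(\<Prod>s<Suc g. c (j + s) (f (s mod g))) \<noteq> 0"
        using fac by (subst prod_zero_iff) auto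
      then have "wcoef c j (map (ed a) (cycw bs 0)) \<noteq> 0"
        unfolding w0 wcoef_map_rev .
      ultimately show ?thesis by simp
    qed
    ultimately show False by simp
  qed
qed

lemma point_bound: "d \<le> card E"
proof -
  define pick where "pick j = (SOME a. a \<in> E \<and> c j a \<noteq> 0)" for j
  have pk: "pick j \<in> E \<and> c j (pick j) \<noteq> 0" if "j < d" for j
  proof -
    have "\<exists>a. a \<in> E \<and> c j a \<noteq> 0" using nonempty[OF that] by blast
    from someI_ex[OF this] show ?thesis unfolding pick_def .
  qed
  have inj: "inj_on pick {..<d}"
  proof (rule inj_onI)
    fix x y assume x: "x \<in> {..<d}" and y: "y \<in> {..<d}" and eq: "pick x = pick y"
    show "x = y"
    proof (rule ccontr)
      assume "x \<noteq> y"
      then consider "x < y" | "y < x" by linarith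
      then show False
      proof cases
        case 1
        have "c x (pick x) = 0 \<or> c (x + (y - x)) (pick x) = 0"
          using disj_gap[of "y - x" x "pick x"] 1 y pk[of x] x by auto
        then show False using pk[of x] pk[of y] x y eq 1 by auto
      next
        case 2
        have "c y (pick y) = 0 \<or> c (y + (x - y)) (pick y) = 0"
          using disj_gap[of "x - y" y "pick y"] 2 x pk[of y] y by auto
        then show False using pk[of x] pk[of y] x y eq 2 by auto
      qed
    qed
  qed
  have "pick ` {..<d} \<subseteq> E" using pk by auto
  from card_inj_on_le[OF inj this finE] show ?thesis by simp
qed

end

definition okb :: "nat \<Rightarrow> nat \<Rightarrow> (nat \<Rightarrow> nat) \<Rightarrow> bool" where
  "okb i j w \<longleftrightarrow> w i < w j \<and> (\<forall>m. i < m \<and> m < j \<longrightarrow> \<not> (w i < w m \<and> w m < w j))"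

definition sw :: "nat \<Rightarrow> nat \<Rightarrow> (nat \<Rightarrow> nat) \<Rightarrow> (nat \<Rightarrow> nat)" where
  "sw i j w = w(i := w j, j := w i)"

lemma tri1_cond:
  fixes a b c :: nat and I1 I2 :: "nat set"
  assumes ab: "a \<noteq> b" and nb: "\<forall>m\<in>I1. w m \<noteq> b" and na: "\<forall>m\<in>I2. w m \<noteq> a"
  shows "((b < c \<and> (\<forall>m\<in>I2. \<not> (b < w m \<and> w m < c))) \<and> (a < c \<and> (\<forall>m\<in>I1. \<not> (a < w m \<and> w m < c))))
    \<longleftrightarrow> ((a < c \<and> (\<forall>m\<in>I1. \<not> (a < w m \<and> w m < c)) \<and> \<not> (a < b \<and> b < c) \<and> (\<forall>m\<in>I2. \<not> (a < w m \<and> w m < c)))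
          \<and> (b < a \<and> (\<forall>m\<in>I2. \<not> (b < w m \<and> w m < a))))
     \<or> ((a < b \<and> (\<forall>m\<in>I1. \<not> (a < w m \<and> w m < b)))
          \<and> (b < c \<and> (\<forall>m\<in>I1. \<not> (b < w m \<and> w m < c)) \<and> \<not> (b < a \<and> a < c) \<and> (\<forall>m\<in>I2. \<not> (b < w m \<and> w m < c))))"
  using assms
proof (cases "a < b")
  case True
  then show ?thesis using assms by (auto; (metis not_less_iff_gr_or_eq)?)
next
  case False
  then have "b < a" using ab by simp
  then show ?thesis using assms by (auto; (metis not_less_iff_gr_or_eq)?)
qed

lemma interval_split:
  fixes i j k :: nat
  assumes "i < j" "j < k"
  shows "(\<forall>m. i < m \<and> m < k \<longrightarrow> P m) \<longleftrightarrow>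
         (\<forall>m\<in>{m. i < m \<and> m < j}. P m) \<and> P j \<and> (\<forall>m\<in>{m. j < m \<and> m < k}. P m)"
proof
  assume h: "\<forall>m. i < m \<and> m < k \<longrightarrow> P m"
  show "(\<forall>m\<in>{m. i < m \<and> m < j}. P m) \<and> P j \<and> (\<forall>m\<in>{m. j < m \<and> m < k}. P m)"
  proof (intro conjI ballI)
    fix m assume "m \<in> {m. i < m \<and> m < j}"
    then have "i < m \<and> m < k" using assms by simp
    then show "P m" using h by blast
  next
    show "P j" using h assms by blast
  next
    fix m assume "m \<in> {m. j < m \<and> m < k}"
    then have "i < m \<and> m < k" using assms by simp
    then show "P m" using h by blast
  qed
next
  assume h: "(\<forall>m\<in>{m. i < m \<and> m < j}. P m) \<and> P j \<and> (\<forall>m\<in>{m. j < m \<and> m < k}. P m)"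
  show "\<forall>m. i < m \<and> m < k \<longrightarrow> P m"
  proof (intro allI impI)
    fix m assume m: "i < m \<and> m < k"
    consider "m < j" | "m = j" | "j < m" by linarith
    then show "P m" using h m by cases auto
  qed
qed

lemma okb_set: "okb i j w \<longleftrightarrow> w i < w j \<and> (\<forall>m\<in>{m. i < m \<and> m < j}. \<not> (w i < w m \<and> w m < w j))"
  unfolding okb_def by auto

lemma okb_split:
  assumes "i < j" "j < k"
  shows "okb i k w \<longleftrightarrow> w i < w k \<and> (\<forall>m\<in>{m. i < m \<and> m < j}. \<not> (w i < w m \<and> w m < w k))
     \<and> \<not> (w i < w j \<and> w j < w k) \<and> (\<forall>m\<in>{m. j < m \<and> m < k}. \<not> (w i < w m \<and> w m < w k))"
  unfolding okb_def using interval_split[OF assms, of "\<lambda>m. \<not> (w i < w m \<and> w m < w k)"] by simp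

lemma sw_apply: "sw i j w m = (if m = i then w j else if m = j then w i else w m)"
  unfolding sw_def by auto

lemma okb_congr:
  fixes i j :: nat
  assumes ij: "i < j" and h: "\<And>m. i \<le> m \<Longrightarrow> m \<le> j \<Longrightarrow> v m = w m"
  shows "okb i j v \<longleftrightarrow> okb i j w"
proof -
  have vi: "v i = w i" and vj: "v j = w j" using h ij by auto
  have vm: "\<forall>m. i < m \<and> m < j \<longrightarrow> v m = w m" using h by auto
  show ?thesis unfolding okb_def vi vj using vm by auto
qed

lemma tri1_full:
  assumes ijk: "i < j" "j < k" and inj: "inj_on w {i..k}"
  shows "(okb j k w \<and> okb i j (sw j k w)) \<longleftrightarrow>
         ((okb i k w \<and> okb j k (sw i k w)) \<or> (okb i j w \<and> okb i k (sw i j w)))"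
    and "\<not> ((okb i k w \<and> okb j k (sw i k w)) \<and> (okb i j w \<and> okb i k (sw i j w)))"
proof -
  let ?a = "w i" and ?b = "w j" and ?c = "w k"
  let ?I1 = "{m. i < m \<and> m < j}" and ?I2 = "{m. j < m \<and> m < k}"
  have ab: "?a \<noteq> ?b" using inj ijk unfolding inj_on_def by force
  have nb: "\<forall>m\<in>?I1. w m \<noteq> ?b" using inj ijk unfolding inj_on_def by force
  have na: "\<forall>m\<in>?I2. w m \<noteq> ?a" using inj ijk unfolding inj_on_def by force
  have e1: "okb j k w \<longleftrightarrow> ?b < ?c \<and> (\<forall>m\<in>?I2. \<not> (?b < w m \<and> w m < ?c))" by (rule okb_set)
  have e2: "okb i j (sw j k w) \<longleftrightarrow> ?a < ?c \<and> (\<forall>m\<in>?I1. \<not> (?a < w m \<and> w m < ?c))"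
    unfolding okb_set using ijk by (auto simp: sw_apply)
  have e3: "okb i k w \<longleftrightarrow> ?a < ?c \<and> (\<forall>m\<in>?I1. \<not> (?a < w m \<and> w m < ?c)) \<and> \<not> (?a < ?b \<and> ?b < ?c) \<and> (\<forall>m\<in>?I2. \<not> (?a < w m \<and> w m < ?c))"
    by (rule okb_split[OF ijk])
  have e4: "okb j k (sw i k w) \<longleftrightarrow> ?b < ?a \<and> (\<forall>m\<in>?I2. \<not> (?b < w m \<and> w m < ?a))"
    unfolding okb_set using ijk by (auto simp: sw_apply)
  have e5: "okb i j w \<longleftrightarrow> ?a < ?b \<and> (\<forall>m\<in>?I1. \<not> (?a < w m \<and> w m < ?b))" by (rule okb_set)
  have e6: "okb i k (sw i j w) \<longleftrightarrow> ?b < ?c \<and> (\<forall>m\<in>?I1. \<not> (?b < w m \<and> w m < ?c)) \<and> \<not> (?b < ?a \<and> ?a < ?c) \<and> (\<forall>m\<in>?I2. \<not> (?b < w m \<and> w m < ?c))"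
  proof -
    have "okb i k (sw i j w) \<longleftrightarrow> sw i j w i < sw i j w k \<and> (\<forall>m\<in>?I1. \<not> (sw i j w i < sw i j w m \<and> sw i j w m < sw i j w k))
     \<and> \<not> (sw i j w i < sw i j w j \<and> sw i j w j < sw i j w k) \<and> (\<forall>m\<in>?I2. \<not> (sw i j w i < sw i j w m \<and> sw i j w m < sw i j w k))"
      by (rule okb_split[OF ijk])
    also have "\<dots> \<longleftrightarrow> ?b < ?c \<and> (\<forall>m\<in>?I1. \<not> (?b < w m \<and> w m < ?c)) \<and> \<not> (?b < ?a \<and> ?a < ?c) \<and> (\<forall>m\<in>?I2. \<not> (?b < w m \<and> w m < ?c))"
      using ijk by (auto simp: sw_apply)
    finally show ?thesis .
  qed
  show "(okb j k w \<and> okb i j (sw j k w)) \<longleftrightarrow>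
         ((okb i k w \<and> okb j k (sw i k w)) \<or> (okb i j w \<and> okb i k (sw i j w)))"
    unfolding e1 e2 e3 e4 e5 e6 by (rule tri1_cond[OF ab nb na])
  show "\<not> ((okb i k w \<and> okb j k (sw i k w)) \<and> (okb i j w \<and> okb i k (sw i j w)))"
    unfolding e4 e5 by auto
qed

lemma tri2_cond:
  fixes a b c :: nat and I1 I2 :: "nat set"
  assumes bc: "b \<noteq> c" and nc: "\<forall>m\<in>I1. w m \<noteq> c" and nb: "\<forall>m\<in>I2. w m \<noteq> b"
  shows "((a < b \<and> (\<forall>m\<in>I1. \<not> (a < w m \<and> w m < b))) \<and> (a < c \<and> (\<forall>m\<in>I2. \<not> (a < w m \<and> w m < c))))
    \<longleftrightarrow> ((b < c \<and> (\<forall>m\<in>I2. \<not> (b < w m \<and> w m < c)))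
          \<and> (a < b \<and> (\<forall>m\<in>I1. \<not> (a < w m \<and> w m < b)) \<and> \<not> (a < c \<and> c < b) \<and> (\<forall>m\<in>I2. \<not> (a < w m \<and> w m < b))))
     \<or> ((a < c \<and> (\<forall>m\<in>I1. \<not> (a < w m \<and> w m < c)) \<and> \<not> (a < b \<and> b < c) \<and> (\<forall>m\<in>I2. \<not> (a < w m \<and> w m < c)))
          \<and> (c < b \<and> (\<forall>m\<in>I1. \<not> (c < w m \<and> w m < b))))"
proof (cases "b < c")
  case True
  then show ?thesis using assms by (auto; (metis not_less_iff_gr_or_eq)?)
next
  case False
  then have "c < b" using bc by simp
  then show ?thesis using assms by (auto; (metis not_less_iff_gr_or_eq)?)
qed

lemma tri2_full:
  assumes ijk: "i < j" "j < k" and inj: "inj_on w {i..k}"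
  shows "(okb i j w \<and> okb j k (sw i j w)) \<longleftrightarrow>
         ((okb j k w \<and> okb i k (sw j k w)) \<or> (okb i k w \<and> okb i j (sw i k w)))"
    and "\<not> ((okb j k w \<and> okb i k (sw j k w)) \<and> (okb i k w \<and> okb i j (sw i k w)))"
proof -
  let ?a = "w i" and ?b = "w j" and ?c = "w k"
  let ?I1 = "{m. i < m \<and> m < j}" and ?I2 = "{m. j < m \<and> m < k}"
  have bc: "?b \<noteq> ?c" using inj ijk unfolding inj_on_def by force
  have nc: "\<forall>m\<in>?I1. w m \<noteq> ?c" using inj ijk unfolding inj_on_def by force
  have nb: "\<forall>m\<in>?I2. w m \<noteq> ?b" using inj ijk unfolding inj_on_def by force
  have e1: "okb i j w \<longleftrightarrow> ?a < ?b \<and> (\<forall>m\<in>?I1. \<not> (?a < w m \<and> w m < ?b))" by (rule okb_set)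
  have e2: "okb j k (sw i j w) \<longleftrightarrow> ?a < ?c \<and> (\<forall>m\<in>?I2. \<not> (?a < w m \<and> w m < ?c))"
    unfolding okb_set using ijk by (auto simp: sw_apply)
  have e3: "okb j k w \<longleftrightarrow> ?b < ?c \<and> (\<forall>m\<in>?I2. \<not> (?b < w m \<and> w m < ?c))" by (rule okb_set)
  have e4: "okb i k (sw j k w) \<longleftrightarrow> ?a < ?b \<and> (\<forall>m\<in>?I1. \<not> (?a < w m \<and> w m < ?b)) \<and> \<not> (?a < ?c \<and> ?c < ?b) \<and> (\<forall>m\<in>?I2. \<not> (?a < w m \<and> w m < ?b))"
  proof -
    have "okb i k (sw j k w) \<longleftrightarrow> sw j k w i < sw j k w k \<and> (\<forall>m\<in>?I1. \<not> (sw j k w i < sw j k w m \<and> sw j k w m < sw j k w k))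
     \<and> \<not> (sw j k w i < sw j k w j \<and> sw j k w j < sw j k w k) \<and> (\<forall>m\<in>?I2. \<not> (sw j k w i < sw j k w m \<and> sw j k w m < sw j k w k))"
      by (rule okb_split[OF ijk])
    also have "\<dots> \<longleftrightarrow> ?a < ?b \<and> (\<forall>m\<in>?I1. \<not> (?a < w m \<and> w m < ?b)) \<and> \<not> (?a < ?c \<and> ?c < ?b) \<and> (\<forall>m\<in>?I2. \<not> (?a < w m \<and> w m < ?b))"
      using ijk by (auto simp: sw_apply)
    finally show ?thesis .
  qed
  have e5: "okb i k w \<longleftrightarrow> ?a < ?c \<and> (\<forall>m\<in>?I1. \<not> (?a < w m \<and> w m < ?c)) \<and> \<not> (?a < ?b \<and> ?b < ?c) \<and> (\<forall>m\<in>?I2. \<not> (?a < w m \<and> w m < ?c))"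
    by (rule okb_split[OF ijk])
  have e6: "okb i j (sw i k w) \<longleftrightarrow> ?c < ?b \<and> (\<forall>m\<in>?I1. \<not> (?c < w m \<and> w m < ?b))"
    unfolding okb_set using ijk by (auto simp: sw_apply)
  show "(okb i j w \<and> okb j k (sw i j w)) \<longleftrightarrow>
         ((okb j k w \<and> okb i k (sw j k w)) \<or> (okb i k w \<and> okb i j (sw i k w)))"
    unfolding e1 e2 e3 e4 e5 e6 by (rule tri2_cond[OF bc nc nb])
  show "\<not> ((okb j k w \<and> okb i k (sw j k w)) \<and> (okb i k w \<and> okb i j (sw i k w)))"
    unfolding e3 e6 by auto
qed

lemma nested_swap:
  assumes "i < k" "k < l" "l < j"
  shows "okb i j (sw k l w) \<longleftrightarrow> okb i j w"
proof -
  have vi: "sw k l w i = w i" and vj: "sw k l w j = w j" using assms by (auto simp: sw_apply)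
  have A: "(\<forall>m. i < m \<and> m < j \<longrightarrow> \<not> (w i < sw k l w m \<and> sw k l w m < w j)) \<longleftrightarrow>
            (\<forall>m. i < m \<and> m < j \<longrightarrow> \<not> (w i < w m \<and> w m < w j))"
  proof
    assume h: "\<forall>m. i < m \<and> m < j \<longrightarrow> \<not> (w i < sw k l w m \<and> sw k l w m < w j)"
    show "\<forall>m. i < m \<and> m < j \<longrightarrow> \<not> (w i < w m \<and> w m < w j)"
    proof (intro allI impI)
      fix m assume m: "i < m \<and> m < j"
      show "\<not> (w i < w m \<and> w m < w j)"
      proof (cases "m = k \<or> m = l")
        case True
        then show ?thesis using h[rule_format, of l] h[rule_format, of k] assms by (auto simp: sw_apply)
      next
        case False
        then show ?thesis using h[rule_format, of m] m by (auto simp: sw_apply)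
      qed
    qed
  next
    assume h: "\<forall>m. i < m \<and> m < j \<longrightarrow> \<not> (w i < w m \<and> w m < w j)"
    show "\<forall>m. i < m \<and> m < j \<longrightarrow> \<not> (w i < sw k l w m \<and> sw k l w m < w j)"
    proof (intro allI impI)
      fix m assume m: "i < m \<and> m < j"
      show "\<not> (w i < sw k l w m \<and> sw k l w m < w j)"
      proof (cases "m = k \<or> m = l")
        case True
        then show ?thesis using h[rule_format, of l] h[rule_format, of k] assms by (auto simp: sw_apply)
      next
        case False
        then show ?thesis using h[rule_format, of m] m by (auto simp: sw_apply)
      qed
    qed
  qed
  show ?thesis unfolding okb_def vi vj A ..
qed

lemma cross_cond:
  fixes p q r s :: nat
  assumes "p \<noteq> r" "p \<noteq> s" "q \<noteq> r" "q \<noteq> s" "p < q" "r < s"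
  shows "(\<not> (r < q \<and> q < s) \<and> \<not> (p < s \<and> s < q)) \<longleftrightarrow> (\<not> (p < r \<and> r < q) \<and> \<not> (r < p \<and> p < s))"
  using assms by auto

lemma cross_swap:
  assumes ikjl: "i < k" "k < j" "j < l" and inj: "inj_on w {i..l}"
  shows "(okb k l w \<and> okb i j (sw k l w)) \<longleftrightarrow> (okb i j w \<and> okb k l (sw i j w))"
proof -
  let ?A = "{m. i < m \<and> m < k}" and ?B = "{m. k < m \<and> m < j}" and ?C = "{m. j < m \<and> m < l}"
  have d: "w i \<noteq> w k" "w i \<noteq> w l" "w j \<noteq> w k" "w j \<noteq> w l" using inj ikjl unfolding inj_on_def by force+
  have e1: "okb k l w \<longleftrightarrow> w k < w l \<and> (\<forall>m\<in>?B. \<not> (w k < w m \<and> w m < w l)) \<and> \<not> (w k < w j \<and> w j < w l) \<and> (\<forall>m\<in>?C. \<not> (w k < w m \<and> w m < w l))"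
    by (rule okb_split) (use ikjl in auto)
  have e2: "okb i j (sw k l w) \<longleftrightarrow> w i < w j \<and> (\<forall>m\<in>?A. \<not> (w i < w m \<and> w m < w j)) \<and> \<not> (w i < w l \<and> w l < w j) \<and> (\<forall>m\<in>?B. \<not> (w i < w m \<and> w m < w j))"
  proof -
    have "okb i j (sw k l w) \<longleftrightarrow> sw k l w i < sw k l w j \<and> (\<forall>m\<in>?A. \<not> (sw k l w i < sw k l w m \<and> sw k l w m < sw k l w j))
      \<and> \<not> (sw k l w i < sw k l w k \<and> sw k l w k < sw k l w j) \<and> (\<forall>m\<in>?B. \<not> (sw k l w i < sw k l w m \<and> sw k l w m < sw k l w j))"
      by (rule okb_split) (use ikjl in auto)
    also have "\<dots> \<longleftrightarrow> w i < w j \<and> (\<forall>m\<in>?A. \<not> (w i < w m \<and> w m < w j)) \<and> \<not> (w i < w l \<and> w l < w j) \<and> (\<forall>m\<in>?B. \<not> (w i < w m \<and> w m < w j))"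
      using ikjl by (auto simp: sw_apply)
    finally show ?thesis .
  qed
  have e3: "okb i j w \<longleftrightarrow> w i < w j \<and> (\<forall>m\<in>?A. \<not> (w i < w m \<and> w m < w j)) \<and> \<not> (w i < w k \<and> w k < w j) \<and> (\<forall>m\<in>?B. \<not> (w i < w m \<and> w m < w j))"
    by (rule okb_split) (use ikjl in auto)
  have e4: "okb k l (sw i j w) \<longleftrightarrow> w k < w l \<and> (\<forall>m\<in>?B. \<not> (w k < w m \<and> w m < w l)) \<and> \<not> (w k < w i \<and> w i < w l) \<and> (\<forall>m\<in>?C. \<not> (w k < w m \<and> w m < w l))"
  proof -
    have "okb k l (sw i j w) \<longleftrightarrow> sw i j w k < sw i j w l \<and> (\<forall>m\<in>?B. \<not> (sw i j w k < sw i j w m \<and> sw i j w m < sw i j w l))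
      \<and> \<not> (sw i j w k < sw i j w j \<and> sw i j w j < sw i j w l) \<and> (\<forall>m\<in>?C. \<not> (sw i j w k < sw i j w m \<and> sw i j w m < sw i j w l))"
      by (rule okb_split) (use ikjl in auto)
    also have "\<dots> \<longleftrightarrow> w k < w l \<and> (\<forall>m\<in>?B. \<not> (w k < w m \<and> w m < w l)) \<and> \<not> (w k < w i \<and> w i < w l) \<and> (\<forall>m\<in>?C. \<not> (w k < w m \<and> w m < w l))"
      using ikjl by (auto simp: sw_apply)
    finally show ?thesis .
  qed
  show ?thesis unfolding e1 e2 e3 e4 using cross_cond[OF d(1) d(2) d(3) d(4)] by blast
qed

definition bstep :: "gen \<Rightarrow> (nat \<Rightarrow> nat) \<Rightarrow> (nat \<Rightarrow> nat) option" where
  "bstep e w = (if fst e < snd e \<and> okb (fst e) (snd e) w then Some (sw (fst e) (snd e) w) else None)"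

fun bru :: "gen list \<Rightarrow> (nat \<Rightarrow> nat) \<Rightarrow> (nat \<Rightarrow> nat) option" where
  "bru [] w = Some w"
| "bru (a # u) w = (case bru u w of None \<Rightarrow> None | Some v \<Rightarrow> bstep a v)"

lemma bru_append: "bru (u @ v) w = (case bru v w of None \<Rightarrow> None | Some x \<Rightarrow> bru u x)"
  by (induction u) (auto split: option.splits)

lemma bru2: "bru [(i,j),(k,l)] w = (if k < l \<and> okb k l w \<and> i < j \<and> okb i j (sw k l w) then Some (sw i j (sw k l w)) else None)"
  by (auto simp: bstep_def)

lemma inj_sw: "inj_on w {1..n} \<Longrightarrow> i \<in> {1..n} \<Longrightarrow> j \<in> {1..n} \<Longrightarrow> inj_on (sw i j w) {1..n}"
  unfolding inj_on_def sw_apply by (metis)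

lemma bru_inj: "set u \<subseteq> gens n \<Longrightarrow> inj_on w {1..n} \<Longrightarrow> bru u w = Some v \<Longrightarrow> inj_on v {1..n}"
proof (induction u arbitrary: v)
  case Nil then show ?case by simp
next
  case (Cons a u)
  obtain x where x: "bru u w = Some x" using Cons.prems by (auto split: option.splits)
  have ix: "inj_on x {1..n}" using Cons x by auto
  have v: "bstep a x = Some v" using Cons.prems x by simp
  have "a \<in> gens n" using Cons.prems by auto
  then have "fst a \<in> {1..n}" "snd a \<in> {1..n}" unfolding gens_def by auto
  moreover have "v = sw (fst a) (snd a) x" using v by (auto simp: bstep_def split: if_splits)
  ultimately show ?case using inj_sw[OF ix] by simp
qed

lemma R_sq: "bru [e,e] w = None"
  by (cases e) (auto simp: bstep_def okb_def sw_apply)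

lemma comm_cond_lt:
  assumes ij: "i < j" and kl: "k < l" and ik: "i < k" and dis: "{i,j} \<inter> {k,l} = {}"
    and inj: "inj_on w {1..n}" and rng: "1 \<le> i" "j \<le> n" "l \<le> n"
  shows "(okb k l w \<and> okb i j (sw k l w)) \<longleftrightarrow> (okb i j w \<and> okb k l (sw i j w))"
proof -
  consider "j < k" | "k < j \<and> l < j" | "k < j \<and> j < l" using dis by (metis insert_disjoint(2) insert_iff linorder_neqE_nat)
  then show ?thesis
  proof cases
    case 1
    have "okb i j (sw k l w) \<longleftrightarrow> okb i j w" by (rule okb_congr) (use ij 1 kl in \<open>auto simp: sw_apply\<close>)
    moreover have "okb k l (sw i j w) \<longleftrightarrow> okb k l w" by (rule okb_congr) (use ij 1 kl in \<open>auto simp: sw_apply\<close>)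
    ultimately show ?thesis by blast
  next
    case 2
    have "okb i j (sw k l w) \<longleftrightarrow> okb i j w" by (rule nested_swap) (use ik kl 2 in auto)
    moreover have "okb k l (sw i j w) \<longleftrightarrow> okb k l w" by (rule okb_congr) (use ik kl 2 in \<open>auto simp: sw_apply\<close>)
    ultimately show ?thesis by blast
  next
    case 3
    have "inj_on w {i..l}" using inj by (rule inj_on_subset) (use rng in auto)
    then show ?thesis using cross_swap[of i k j l w] ik 3 by blast
  qed
qed

lemma R_comm:
  assumes e: "(i,j) \<in> gens n" and f: "(k,l) \<in> gens n" and dis: "{i,j} \<inter> {k,l} = {}" and inj: "inj_on w {1..n}"
  shows "bru [(i,j),(k,l)] w = bru [(k,l),(i,j)] w"
proof -
  have ij: "i < j" "1 \<le> i" "j \<le> n" and kl: "k < l" "1 \<le> k" "l \<le> n" using e f unfolding gens_def by auto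
  have ne: "i \<noteq> k" using dis by auto
  have cond: "(okb k l w \<and> okb i j (sw k l w)) \<longleftrightarrow> (okb i j w \<and> okb k l (sw i j w))"
  proof (cases "i < k")
    case True then show ?thesis using comm_cond_lt[of i j k l w n] ij kl dis inj by blast
  next
    case False
    then have "k < i" using ne by simp
    then show ?thesis using comm_cond_lt[of k l i j w n] ij kl dis inj by blast
  qed
  have sweq: "sw i j (sw k l w) = sw k l (sw i j w)" using dis by (auto simp: sw_def fun_eq_iff)
  show ?thesis unfolding bru2 using cond sweq ij kl by auto
qed

lemma R_tri1:
  assumes ijk: "1 \<le> i" "i < j" "j < k" "k \<le> n" and inj: "inj_on w {1..n}" and G0: "G None = 0"
  shows "G (bru [(i,j),(j,k)] w) - G (bru [(j,k),(i,k)] w) - G (bru [(i,k),(i,j)] w) = (0::'k::comm_ring_1)"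
proof -
  have inj': "inj_on w {i..k}" using inj by (rule inj_on_subset) (use ijk in auto)
  note F = tri1_full[OF ijk(2,3) inj']
  have eq1: "sw j k (sw i k w) = sw i j (sw j k w)" and eq2: "sw i k (sw i j w) = sw i j (sw j k w)"
    using ijk by (auto simp: sw_def fun_eq_iff)
  show ?thesis unfolding bru2 using F eq1 eq2 ijk G0 by (auto split: if_splits)
qed

lemma R_tri2:
  assumes ijk: "1 \<le> i" "i < j" "j < k" "k \<le> n" and inj: "inj_on w {1..n}" and G0: "G None = 0"
  shows "G (bru [(j,k),(i,j)] w) - G (bru [(i,k),(j,k)] w) - G (bru [(i,j),(i,k)] w) = (0::'k::comm_ring_1)"
proof -
  have inj': "inj_on w {i..k}" using inj by (rule inj_on_subset) (use ijk in auto)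
  note F = tri2_full[OF ijk(2,3) inj']
  have eq1: "sw i k (sw j k w) = sw j k (sw i j w)" and eq2: "sw i j (sw i k w) = sw j k (sw i j w)"
    using ijk by (auto simp: sw_def fun_eq_iff)
  show ?thesis unfolding bru2 using F eq1 eq2 ijk G0 by (auto split: if_splits)
qed

definition Wn :: "nat \<Rightarrow> nat \<Rightarrow> gen list set" where
  "Wn n l = {x. set x \<subseteq> gens n \<and> length x = l}"

lemma finite_Wn: "finite (Wn n l)"
  unfolding Wn_def using finite_gens by (rule finite_lists_length_eq)

lemma sum_word_eval': "finite W \<Longrightarrow> (\<Sum>x\<in>W. (nc_word u x :: 'k::comm_ring_1) * F x) = (if u \<in> W then F u else 0)"
proof -
  assume "finite W"
  have "(\<Sum>x\<in>W. (nc_word u x :: 'k) * F x) = (\<Sum>x\<in>W. if u = x then F x else 0)"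
    by (rule sum.cong) (auto simp: nc_word_def)
  then show ?thesis using \<open>finite W\<close> by simp
qed

lemma in_Wn2: "a \<in> gens n \<Longrightarrow> b \<in> gens n \<Longrightarrow> [a,b] \<in> Wn n l \<longleftrightarrow> l = 2"
  unfolding Wn_def by auto

lemma rel_bru:
  assumes r: "r \<in> fk_relators n" and inj: "inj_on w {1..n}" and G0: "G None = 0"
  shows "(\<Sum>x\<in>Wn n l. (r x :: 'k::comm_ring_1) * G (bru x w)) = 0"
proof -
  let ?F = "\<lambda>x. G (bru x w)"
  have ev: "(\<Sum>x\<in>Wn n l. (nc_word u x :: 'k) * ?F x) = (if u \<in> Wn n l then ?F u else 0)" for u
    by (rule sum_word_eval'[OF finite_Wn])
  have lin_sub: "(\<Sum>x\<in>Wn n l. nc_sub p q x * ?F x) = (\<Sum>x\<in>Wn n l. p x * ?F x) - (\<Sum>x\<in>Wn n l. (q x :: 'k) * ?F x)" for p q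
    by (simp add: nc_sub_def left_diff_distrib sum_subtractf)
  from r consider
      (sq) i j where "r = nc_word [(i,j),(i,j)]" "(i,j) \<in> gens n"
    | (cm) i j k' l' where "r = nc_sub (nc_word [(i,j),(k',l')]) (nc_word [(k',l'),(i,j)])"
        "(i,j) \<in> gens n" "(k',l') \<in> gens n" "{i,j} \<inter> {k',l'} = {}"
    | (t1) i j k where "r = nc_sub (nc_sub (nc_word [(i,j),(j,k)]) (nc_word [(j,k),(i,k)])) (nc_word [(i,k),(i,j)])"
        "1 \<le> i" "i < j" "j < k" "k \<le> n"
    | (t2) i j k where "r = nc_sub (nc_sub (nc_word [(j,k),(i,j)]) (nc_word [(i,k),(j,k)])) (nc_word [(i,j),(i,k)])"
        "1 \<le> i" "i < j" "j < k" "k \<le> n"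
    unfolding fk_relators_def by blast
  then show ?thesis
  proof cases
    case sq
    then show ?thesis using ev[of "[(i,j),(i,j)]"] R_sq[of "(i,j)" w] G0 by simp
  next
    case cm
    have "bru [(i,j),(k',l')] w = bru [(k',l'),(i,j)] w" using R_comm cm inj by blast
    then show ?thesis unfolding cm(1) lin_sub ev using in_Wn2 cm by simp
  next
    case t1
    have g: "(i,j) \<in> gens n" "(j,k) \<in> gens n" "(i,k) \<in> gens n" using t1 unfolding gens_def by auto
    show ?thesis unfolding t1(1) lin_sub ev using in_Wn2[OF g(1) g(2)] in_Wn2[OF g(2) g(3)] in_Wn2[OF g(3) g(1)]
      R_tri1[of i j k n w G, OF t1(2-5) inj G0] by (simp add: algebra_simps)
  next
    case t2
    have g: "(i,j) \<in> gens n" "(j,k) \<in> gens n" "(i,k) \<in> gens n" using t2 unfolding gens_def by auto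
    show ?thesis unfolding t2(1) lin_sub ev using in_Wn2[OF g(2) g(1)] in_Wn2[OF g(3) g(2)] in_Wn2[OF g(1) g(3)]
      R_tri2[of i j k n w G, OF t2(2-5) inj G0] by (simp add: algebra_simps)
  qed
qed

lemma prefix_sum:
  assumes u: "set u \<subseteq> gens n"
  shows "(\<Sum>x\<in>Wn n l. if take (length u) x = u then H (drop (length u) x) else (0::'k::comm_ring_1))
       = (if length u \<le> l then (\<Sum>y\<in>Wn n (l - length u). H y) else 0)"
proof -
  have "(\<Sum>x\<in>Wn n l. if take (length u) x = u then H (drop (length u) x) else 0)
      = (\<Sum>x\<in>{x\<in>Wn n l. take (length u) x = u}. H (drop (length u) x))"
    by (rule sum.inter_filter[OF finite_Wn, symmetric])
  also have "\<dots> = (if length u \<le> l then (\<Sum>y\<in>Wn n (l - length u). H y) else 0)"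
  proof (cases "length u \<le> l")
    case True
    have img: "{x\<in>Wn n l. take (length u) x = u} = (\<lambda>y. u @ y) ` Wn n (l - length u)"
    proof (intro set_eqI iffI)
      fix x assume "x \<in> {x\<in>Wn n l. take (length u) x = u}"
      then have x: "set x \<subseteq> gens n" "length x = l" "take (length u) x = u" unfolding Wn_def by auto
      then have "x = u @ drop (length u) x" by (metis append_take_drop_id)
      moreover have "drop (length u) x \<in> Wn n (l - length u)" using x unfolding Wn_def
        by (auto dest: in_set_dropD)
      ultimately show "x \<in> (\<lambda>y. u @ y) ` Wn n (l - length u)" by blast
    next
      fix x assume "x \<in> (\<lambda>y. u @ y) ` Wn n (l - length u)"
      then obtain y where "x = u @ y" "y \<in> Wn n (l - length u)" by blast
      then show "x \<in> {x\<in>Wn n l. take (length u) x = u}" using u True unfolding Wn_def by auto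
    qed
    have inj: "inj_on (\<lambda>y. u @ y) (Wn n (l - length u))" by (rule inj_onI) simp
    show ?thesis using True unfolding img by (simp add: sum.reindex[OF inj])
  next
    case False
    have "False" if "length x = l" "take (length u) x = u" for x
    proof -
      have "length (take (length u) x) = min (length u) l" using that(1) by simp
      then have "length u = min (length u) l" using that(2) by simp
      then show False using False by simp
    qed
    then have emp: "{x\<in>Wn n l. take (length u) x = u} = {}" unfolding Wn_def by auto
    show ?thesis unfolding emp using False by simp
  qed
  finally show ?thesis .
qed

lemma suffix_sum:
  assumes v: "set v \<subseteq> gens n"
  shows "(\<Sum>x\<in>Wn n l. if length v \<le> length x \<and> drop (length x - length v) x = v then H (take (length x - length v) x) else (0::'k::comm_ring_1))
       = (if length v \<le> l then (\<Sum>y\<in>Wn n (l - length v). H y) else 0)"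
proof -
  let ?P = "\<lambda>x. length v \<le> length x \<and> drop (length x - length v) x = v"
  have "(\<Sum>x\<in>Wn n l. if ?P x then H (take (length x - length v) x) else 0)
      = (\<Sum>x\<in>{x\<in>Wn n l. ?P x}. H (take (length x - length v) x))"
    by (rule sum.inter_filter[OF finite_Wn, symmetric])
  also have "\<dots> = (if length v \<le> l then (\<Sum>y\<in>Wn n (l - length v). H y) else 0)"
  proof (cases "length v \<le> l")
    case True
    have img: "{x\<in>Wn n l. ?P x} = (\<lambda>y. y @ v) ` Wn n (l - length v)"
    proof (intro set_eqI iffI)
      fix x assume "x \<in> {x\<in>Wn n l. ?P x}"
      then have x: "set x \<subseteq> gens n" "length x = l" "?P x" unfolding Wn_def by auto
      then have "x = take (length x - length v) x @ v" by (metis append_take_drop_id)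
      moreover have "take (length x - length v) x \<in> Wn n (l - length v)" using x unfolding Wn_def
        by (auto dest: in_set_takeD)
      ultimately show "x \<in> (\<lambda>y. y @ v) ` Wn n (l - length v)" by blast
    next
      fix x assume "x \<in> (\<lambda>y. y @ v) ` Wn n (l - length v)"
      then obtain y where "x = y @ v" "y \<in> Wn n (l - length v)" by blast
      then show "x \<in> {x\<in>Wn n l. ?P x}" using v True unfolding Wn_def by auto
    qed
    have inj: "inj_on (\<lambda>y. y @ v) (Wn n (l - length v))" by (rule inj_onI) simp
    show ?thesis using True unfolding img by (simp add: sum.reindex[OF inj])
  next
    case False
    then have emp: "{x\<in>Wn n l. ?P x} = {}" unfolding Wn_def by auto
    show ?thesis unfolding emp using False by simp
  qed
  finally show ?thesis .
qed

lemma ideal_bru: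
  assumes "p \<in> fk_ideal n"
  shows "\<forall>l w G. inj_on w {1..n} \<longrightarrow> G None = 0 \<longrightarrow> (\<Sum>x\<in>Wn n l. (p x :: 'k::comm_ring_1) * G (bru x w)) = 0"
  using assms
proof (induction rule: fk_ideal.induct)
  case zero
  then show ?case by simp
next
  case (rel r)
  then show ?case using rel_bru by blast
next
  case (add p q)
  then show ?case by (simp add: nc_add_def distrib_right sum.distrib)
next
  case (smult p c)
  then show ?case by (simp add: nc_smult_def mult.assoc sum_distrib_left[symmetric])
next
  case (lmult p u)
  show ?case
  proof (intro allI impI)
    fix l and w :: "nat \<Rightarrow> nat" and G :: "((nat \<Rightarrow> nat) option) \<Rightarrow> 'k"
    assume inj: "inj_on w {1..n}" and G0: "G None = 0"
    define G' where "G' ov = (case ov of None \<Rightarrow> 0 | Some y \<Rightarrow> G (bru u y))" for ov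
    have G'0: "G' None = 0" unfolding G'_def by simp
    have GG: "G (bru (u @ y) w) = G' (bru y w)" for y
      unfolding G'_def bru_append using G0 by (auto split: option.splits)
    have u: "set u \<subseteq> gens n" using lmult.hyps(2) by auto
    have "(\<Sum>x\<in>Wn n l. nc_mult (nc_word u) p x * G (bru x w))
       = (\<Sum>x\<in>Wn n l. if take (length u) x = u then p (drop (length u) x) * G (bru (u @ drop (length u) x) w) else 0)"
      unfolding nc_mult_word_left by (rule sum.cong) (auto, metis append_take_drop_id)
    also have "\<dots> = (if length u \<le> l then (\<Sum>y\<in>Wn n (l - length u). p y * G (bru (u @ y) w)) else 0)"
      by (rule prefix_sum[OF u])
    also have "\<dots> = 0" using lmult.IH inj G'0 unfolding GG by simp
    finally show "(\<Sum>x\<in>Wn n l. nc_mult (nc_word u) p x * G (bru x w)) = 0" .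
  qed
next
  case (rmult p u)
  show ?case
  proof (intro allI impI)
    fix l and w :: "nat \<Rightarrow> nat" and G :: "((nat \<Rightarrow> nat) option) \<Rightarrow> 'k"
    assume inj: "inj_on w {1..n}" and G0: "G None = 0"
    have u: "set u \<subseteq> gens n" using rmult.hyps(2) by auto
    have "(\<Sum>x\<in>Wn n l. nc_mult p (nc_word u) x * G (bru x w))
       = (\<Sum>x\<in>Wn n l. if length u \<le> length x \<and> drop (length x - length u) x = u
            then p (take (length x - length u) x) * G (bru (take (length x - length u) x @ u) w) else 0)"
      unfolding nc_mult_word_right by (rule sum.cong) (auto, metis append_take_drop_id)
    also have "\<dots> = (if length u \<le> l then (\<Sum>y\<in>Wn n (l - length u). p y * G (bru (y @ u) w)) else 0)"
      by (rule suffix_sum[OF u])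
    also have "\<dots> = 0"
    proof (cases "bru u w")
      case None
      then show ?thesis using G0 by (simp add: bru_append)
    next
      case (Some v)
      have iv: "inj_on v {1..n}" using bru_inj[OF u inj Some] .
      then show ?thesis using rmult.IH G0 Some by (simp add: bru_append)
    qed
    finally show "(\<Sum>x\<in>Wn n l. nc_mult p (nc_word u) x * G (bru x w)) = 0" .
  qed
qed

definition Inv :: "nat \<Rightarrow> nat \<Rightarrow> (nat \<Rightarrow> nat) \<Rightarrow> bool" where
  "Inv n q v \<longleftrightarrow> (\<forall>x\<in>{1..n}. x \<noteq> q \<longrightarrow> v q < v x) \<and>
     (\<forall>x\<in>{1..n}. \<forall>y\<in>{1..n}. x \<noteq> q \<longrightarrow> y \<noteq> q \<longrightarrow> x < y \<longrightarrow> v y < v x)"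

lemma Inv_step:
  assumes inv: "Inv n q v" and q: "1 \<le> q" "q \<le> n" and p: "1 \<le> p" "p < n"
  shows "bstep (p, Suc p) v = (if p = q then Some (sw q (Suc q) v) else None)"
    and "p = q \<Longrightarrow> Inv n (Suc q) (sw q (Suc q) v)"
proof -
  have A: "\<And>x. x \<in> {1..n} \<Longrightarrow> x \<noteq> q \<Longrightarrow> v q < v x"
    and B: "\<And>x y. x \<in> {1..n} \<Longrightarrow> y \<in> {1..n} \<Longrightarrow> x \<noteq> q \<Longrightarrow> y \<noteq> q \<Longrightarrow> x < y \<Longrightarrow> v y < v x"
    using inv unfolding Inv_def by blast+
  have okb: "okb p (Suc p) v \<longleftrightarrow> v p < v (Suc p)" unfolding okb_def by auto
  have "v p < v (Suc p) \<longleftrightarrow> p = q"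
  proof
    assume lt: "v p < v (Suc p)"
    show "p = q"
    proof (rule ccontr)
      assume pq: "p \<noteq> q"
      show False
      proof (cases "Suc p = q")
        case True
        have "v q < v p" using A[of p] p pq by simp
        then show False using lt True by simp
      next
        case False
        have "v (Suc p) < v p" using B[of p "Suc p"] p pq False by simp
        then show False using lt by simp
      qed
    qed
  next
    assume "p = q"
    then show "v p < v (Suc p)" using A[of "Suc p"] p by simp
  qed
  then show "bstep (p, Suc p) v = (if p = q then Some (sw q (Suc q) v) else None)"
    unfolding bstep_def using okb by auto
  assume pq: "p = q"
  show "Inv n (Suc q) (sw q (Suc q) v)"
    unfolding Inv_def
  proof (intro conjI ballI impI)
    fix x assume x: "x \<in> {1..n}" "x \<noteq> Suc q"
    show "sw q (Suc q) v (Suc q) < sw q (Suc q) v x"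
    proof (cases "x = q")
      case True
      then show ?thesis using A[of "Suc q"] pq p by (simp add: sw_apply)
    next
      case False
      then show ?thesis using A[of x] x by (simp add: sw_apply)
    qed
  next
    fix x y assume x: "x \<in> {1..n}" and y: "y \<in> {1..n}" and xq: "x \<noteq> Suc q" and yq: "y \<noteq> Suc q" and xy: "x < y"
    show "sw q (Suc q) v y < sw q (Suc q) v x"
    proof (cases "x = q")
      case True
      then have "y \<noteq> q" "Suc q < y" using xy yq by auto
      then show ?thesis using B[of "Suc q" y] True y pq p by (simp add: sw_apply)
    next
      case False
      note xq' = False
      show ?thesis
      proof (cases "y = q")
        case True
        then have "x < Suc q" using xy by simp
        then show ?thesis using B[of x "Suc q"] x xq' xq True pq p by (simp add: sw_apply)
      next
        case False
        then show ?thesis using B[of x y] x y xq' xq yq xy by (simp add: sw_apply)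
      qed
    qed
  qed
qed

definition pc :: "nat \<Rightarrow> nat \<Rightarrow> gen \<Rightarrow> 'k::field" where
  "pc m j a = (if j < m \<and> a = (Suc j, Suc (Suc j)) then 1 else 0)"

lemma path_edges_iff: "a \<in> path_edges n \<longleftrightarrow> (\<exists>p. 1 \<le> p \<and> p < n \<and> a = (p, Suc p))"
  unfolding path_edges_def by auto

lemma bru_wcoef:
  assumes w: "set w \<subseteq> path_edges (Suc m)" and inv: "Inv (Suc m) (Suc i) \<sigma>" and i: "i \<le> m"
  shows "(case bru w \<sigma> of None \<Rightarrow> wcoef (pc m) i w = (0::'k::field)
          | Some v \<Rightarrow> wcoef (pc m) i w = (1::'k) \<and> Inv (Suc m) (Suc (i + length w)) v \<and> i + length w \<le> m)"
  using w
proof (induction w)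
  case Nil
  then show ?case using inv i by simp
next
  case (Cons a w')
  obtain p where p: "1 \<le> p" "p < Suc m" "a = (p, Suc p)" using Cons.prems path_edges_iff by auto
  have IH: "case bru w' \<sigma> of None \<Rightarrow> wcoef (pc m) i w' = (0::'k)
          | Some v \<Rightarrow> wcoef (pc m) i w' = (1::'k) \<and> Inv (Suc m) (Suc (i + length w')) v \<and> i + length w' \<le> m"
    using Cons by auto
  show ?case
  proof (cases "bru w' \<sigma>")
    case None
    then show ?thesis using IH by simp
  next
    case (Some v)
    then have v: "wcoef (pc m) i w' = (1::'k)" "Inv (Suc m) (Suc (i + length w')) v" "i + length w' \<le> m"
      using IH by auto
    note st = Inv_step[OF v(2) _ _ p(1) p(2)]
    have pcv: "pc m (i + length w') a = ((if p = Suc (i + length w') then 1 else 0) :: 'k)"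
      unfolding pc_def using p v(3) by auto
    show ?thesis
    proof (cases "p = Suc (i + length w')")
      case True
      then show ?thesis using Some st v p pcv by auto
    next
      case False
      then show ?thesis using Some st v p pcv by auto
    qed
  qed
qed

lemma path_module: "truncated_point_module (Suc m) (path_edges (Suc m)) m (pc m :: nat \<Rightarrow> gen \<Rightarrow> 'k::field)"
  unfolding truncated_point_module_def
proof (intro conjI allI impI ballI)
  fix j a assume "m \<le> j"
  then show "(pc m j a :: 'k) = 0" unfolding pc_def by auto
next
  fix i assume i: "i \<le> m"
  define w where "w = map (\<lambda>s. (Suc s, Suc (Suc s))) (rev [0..<i])"
  have "set w \<subseteq> path_edges (Suc m)" unfolding w_def path_edges_def using i by auto
  moreover have "length w = i" unfolding w_def by simp
  moreover have "wcoef (pc m) 0 w = (1::'k)"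
    unfolding w_def wcoef_map_rev using i by (simp add: pc_def)
  ultimately show "\<exists>w. set w \<subseteq> path_edges (Suc m) \<and> length w = i \<and> wcoef (pc m) 0 w \<noteq> (0::'k)"
    by (intro exI[of _ w]) simp
next
  fix p :: "'k ncpoly" and i l
  assume p: "p \<in> fkG_kernel (Suc m) (path_edges (Suc m))" and i: "i \<le> m"
  let ?n = "Suc m" and ?E = "path_edges (Suc m)"
  define \<sigma> where "\<sigma> x = (if x = Suc i then 0 else Suc (Suc ?n) - x)" for x
  have inv: "Inv ?n (Suc i) \<sigma>" unfolding Inv_def \<sigma>_def by auto
  have inj: "inj_on \<sigma> {1..?n}" unfolding inj_on_def \<sigma>_def by auto
  define G where "G ov = (case ov of None \<Rightarrow> 0 | Some (v :: nat \<Rightarrow> nat) \<Rightarrow> (1::'k))" for ov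
  have G0: "G None = 0" unfolding G_def by simp
  have wc: "wcoef (pc m) i w = G (bru w \<sigma>)" if "set w \<subseteq> ?E" for w
    using bru_wcoef[OF that inv i] unfolding G_def by (auto split: option.splits)
  have EG: "?E \<subseteq> gens ?n" unfolding path_edges_def gens_def by auto
  have pI: "p \<in> fk_ideal ?n" and psup: "\<And>w. p w \<noteq> 0 \<Longrightarrow> w \<in> lists ?E"
    using p unfolding fkG_kernel_def by auto
  have "(\<Sum>w\<in>{w. set w \<subseteq> ?E \<and> length w = l}. p w * wcoef (pc m) i w)
      = (\<Sum>w\<in>{w. set w \<subseteq> ?E \<and> length w = l}. p w * G (bru w \<sigma>))"
    by (rule sum.cong) (auto simp: wc)
  also have "\<dots> = (\<Sum>w\<in>Wn ?n l. p w * G (bru w \<sigma>))"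
  proof (rule sum.mono_neutral_left[OF finite_Wn])
    show "{w. set w \<subseteq> ?E \<and> length w = l} \<subseteq> Wn ?n l" unfolding Wn_def using EG by auto
  next
    show "\<forall>w\<in>Wn ?n l - {w. set w \<subseteq> ?E \<and> length w = l}. p w * G (bru w \<sigma>) = 0"
    proof
      fix w assume "w \<in> Wn ?n l - {w. set w \<subseteq> ?E \<and> length w = l}"
      then have "w \<notin> lists ?E" unfolding Wn_def by auto
      then have "p w = 0" using psup by blast
      then show "p w * G (bru w \<sigma>) = 0" by simp
    qed
  qed
  also have "\<dots> = 0" using ideal_bru[OF pI] inj G0 by blast
  finally show "(\<Sum>w\<in>{w. set w \<subseteq> ?E \<and> length w = l}. p w * wcoef (pc m) i w) = 0" .
qed

lemma card_path: "card (path_edges (Suc m)) = m"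
proof -
  have "path_edges (Suc m) = (\<lambda>p. (p, Suc p)) ` {1..m}" unfolding path_edges_def by auto
  moreover have "inj_on (\<lambda>p. (p, Suc p)) {1..m}" by (rule inj_onI) auto
  ultimately show ?thesis by (simp add: card_image)
qed

lemma adj_path: "adj (path_edges n) x y \<longleftrightarrow> (1 \<le> x \<and> y = Suc x \<and> y \<le> n) \<or> (1 \<le> y \<and> x = Suc y \<and> x \<le> n)"
  unfolding adj_def path_edges_def by (auto simp: min_def max_def split: if_splits)

lemma path_tree: "is_tree (Suc m) (path_edges (Suc m))"
  unfolding is_tree_def
proof (intro conjI)
  show "1 \<le> Suc m" by simp
  show "path_edges (Suc m) \<subseteq> gens (Suc m)" unfolding path_edges_def gens_def by auto
next
  let ?R = "{(a, b). adj (path_edges (Suc m)) a b}"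
  have up: "(1, u) \<in> ?R\<^sup>* \<and> (u, 1) \<in> ?R\<^sup>*" if "u \<in> {1..Suc m}" for u
    using that
  proof (induction u)
    case 0 then show ?case by simp
  next
    case (Suc u)
    show ?case
    proof (cases "u = 0")
      case True then show ?thesis by simp
    next
      case False
      then have IH: "(1, u) \<in> ?R\<^sup>* \<and> (u, 1) \<in> ?R\<^sup>*" using Suc by auto
      have "(u, Suc u) \<in> ?R" "(Suc u, u) \<in> ?R" using False Suc.prems by (auto simp: adj_path)
      then show ?thesis using IH by (meson converse_rtrancl_into_rtrancl rtrancl_into_rtrancl)
    qed
  qed
  show "connected_graph (Suc m) (path_edges (Suc m))"
    unfolding connected_graph_def
  proof (intro ballI)
    fix u v assume u: "u \<in> {1..Suc m}" and v: "v \<in> {1..Suc m}"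
    have "(u, 1) \<in> ?R\<^sup>*" using up[OF u] by blast
    moreover have "(1, v) \<in> ?R\<^sup>*" using up[OF v] by blast
    ultimately show "(u, v) \<in> ?R\<^sup>*" by (rule rtrancl_trans)
  qed
next
  show "acyclic_graph (path_edges (Suc m))"
    unfolding acyclic_graph_def
  proof
    assume "\<exists>vs. 3 \<le> length vs \<and> distinct vs \<and>
      (\<forall>i<length vs. adj (path_edges (Suc m)) (vs ! i) (vs ! ((i + 1) mod length vs)))"
    then obtain vs where L: "3 \<le> length vs" and d: "distinct vs"
      and a: "\<forall>i<length vs. adj (path_edges (Suc m)) (vs ! i) (vs ! ((i + 1) mod length vs))" by blast
    define L where "L = length vs"
    have ne: "set vs \<noteq> {}" using L by auto
    define M where "M = Max (set vs)"
    have "M \<in> set vs" unfolding M_def using ne by simp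
    then obtain k where k: "k < L" "vs ! k = M" unfolding L_def by (metis in_set_conv_nth)
    have le: "vs ! i \<le> M" if "i < L" for i unfolding M_def L_def using that L_def by simp
    define k1 where "k1 = (if k = L - 1 then 0 else Suc k)"
    define k0 where "k0 = (if k = 0 then L - 1 else k - 1)"
    have k1L: "k1 < L" and k0L: "k0 < L" unfolding k1_def k0_def using k L L_def by auto
    have k1m: "(k + 1) mod L = k1"
    proof (cases "k = L - 1")
      case True
      then have "k + 1 = L" using L L_def by simp
      then show ?thesis unfolding k1_def using True by simp
    next
      case False
      then have "k + 1 < L" using k by simp
      then show ?thesis unfolding k1_def using False by simp
    qed
    have k0m: "(k0 + 1) mod L = k"
    proof (cases "k = 0")
      case True
      then have "k0 + 1 = L" unfolding k0_def using L L_def by simp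
      then show ?thesis using True by simp
    next
      case False
      then have "k0 + 1 = k" unfolding k0_def by simp
      then show ?thesis using k by simp
    qed
    have "adj (path_edges (Suc m)) M (vs ! k1)" using a k k1m unfolding L_def by metis
    then have n1: "vs ! k1 = M - 1" using le[OF k1L] by (auto simp: adj_path)
    have "adj (path_edges (Suc m)) (vs ! k0) M" using a k0L k k0m unfolding L_def by metis
    then have n0: "vs ! k0 = M - 1" using le[OF k0L] by (auto simp: adj_path)
    have "k1 \<noteq> k0" unfolding k1_def k0_def using k L L_def by auto
    then show False using n0 n1 d k1L k0L unfolding L_def by (metis nth_eq_iff_index_eq)
  qed
qed

theorem theorem1p2:
  fixes T :: "'k::field itself"
  assumes alg_closed: "\<forall>q :: 'k poly. 0 < degree q \<longrightarrow> (\<exists>x. poly q x = 0)"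
  shows "(\<forall>n E. is_tree n E \<longrightarrow> pinv TYPE('k) n E \<le> enat (card E))
         \<and> (\<forall>m. pinv TYPE('k) (m + 1) (path_edges (m + 1)) = enat m)"
proof (intro conjI allI impI)
  fix n E assume tree: "is_tree n E"
  show "pinv TYPE('k) n E \<le> enat (card E)"
    unfolding pinv_def
  proof (rule Sup_least)
    fix x assume "x \<in> {enat d |d. \<exists>c :: nat \<Rightarrow> gen \<Rightarrow> 'k. truncated_point_module n E d c}"
    then obtain d and c :: "nat \<Rightarrow> gen \<Rightarrow> 'k" where x: "x = enat d" and pm: "truncated_point_module n E d c" by blast
    have "d \<le> card E" by (rule point_bound[OF tree pm])
    then show "x \<le> enat (card E)" using x by simp
  qed
next
  fix m
  have tree: "is_tree (Suc m) (path_edges (Suc m))" by (rule path_tree)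
  have le: "pinv TYPE('k) (Suc m) (path_edges (Suc m)) \<le> enat m"
    unfolding pinv_def
  proof (rule Sup_least)
    fix x assume "x \<in> {enat d |d. \<exists>c :: nat \<Rightarrow> gen \<Rightarrow> 'k. truncated_point_module (Suc m) (path_edges (Suc m)) d c}"
    then obtain d and c :: "nat \<Rightarrow> gen \<Rightarrow> 'k" where x: "x = enat d" and pm: "truncated_point_module (Suc m) (path_edges (Suc m)) d c" by blast
    have "d \<le> card (path_edges (Suc m))" by (rule point_bound[OF tree pm])
    then show "x \<le> enat m" using x card_path by simp
  qed
  have ge: "enat m \<le> pinv TYPE('k) (Suc m) (path_edges (Suc m))"
    unfolding pinv_def
    by (rule Sup_upper) (use path_module[where 'k='k, of m] in blast)
  show "pinv TYPE('k) (m + 1) (path_edges (m + 1)) = enat m"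
    using le ge by simp
qed

end
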